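(* Fix one of the two variants $\sharp\in\{\text{lumped},\text{exact}\}$ described in the context. Suppose $\partial_0I=\emptyset$, let $\vec X^m\in\underline V^h$ satisfy assumption $(\mathfrak A)$, and let $0<\Delta t_m<3\min_{\overline I}(\vec X^m\cdot\vec e_1)^2$. Then there exists a pair $(\delta\vec X^{m+1},\vec\kappa^{m+1})\in\underline V^h_\partial\times\underline V^h$ such that, with $\vec X^{m+1}=\vec X^m+\delta\vec X^{m+1}$, $$\Big(\vec X^m\cdot\vec e_1\,\tfrac{\vec X^{m+1}-\vec X^m}{\Delta t_m},\vec\chi\,|\vec X^m_\rho|\Big)_\sharp=\Big((\vec X^m\cdot\vec e_1)\vec\kappa^{m+1},\vec\chi\,|\vec X^m_\rho|\Big)_\sharp\quad\forall\,\vec\chi\in\underline V^h,$$ $$\Big((\vec X^m\cdot\vec e_1)\vec\kappa^{m+1},\vec\eta\,|\vec X^m_\rho|\Big)_\sharp+\big(\vec\eta\cdot\vec e_1,|\vec X^{m+1}_\rho|\big)+\Big((\vec X^m\cdot\vec e_1)\vec X^{m+1}_\rho,\vec\eta_\rho|\vec X^m_\rho|^{-1}\Big)$$ $$=-\sum_{p\in\partial_1I}\widehat\varrho^{(p)}(\vec X^m(p)\cdot\vec e_1)\,\vec\eta(p)\cdot\vec e_2-\sum_{p\in\partial_2I}\Big(\big([\widehat\varrho^{(p)}]_+\vec X^{m+1}(p)+[\widehat\varrho^{(p)}]_-\vec X^m(p)\big)\cdot\vec e_1\Big)\,\vec\eta(p)\cdot\vec e_1\quad\forall\,\vec\eta\in\underline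 V^h_\partial .$$
   Context: Setup. $\vec e_1=(1,0)^T$, $\vec e_2=(0,1)^T$; "$\cdot$" is the Euclidean inner product; $[r]_+=\max\{r,0\}$, $[r]_-=-\max\{-r,0\}$. $I$ is either the periodic interval $\mathbb R/\mathbb Z$ (with $\partial I=\emptyset$) or $I=(0,1)$ (with $\partial I=\{0,1\}$). $\partial I=\partial_DI\cup\partial_0I\cup\partial_1I\cup\partial_2I$ is a given disjoint partition, and $\widehat\varrho^{(p)}\in\mathbb R$, $p\in\{0,1\}$, are given constants with $|\widehat\varrho^{(p)}|\le1$. Let $J\ge3$, $h=1/J$, $q_j=jh$ ($j=0,\dots,J$; $q_0=q_J$ identified in the periodic case). $V^h$ is the space of continuous functions on $\overline I$ (periodic if $I=\mathbb R/\mathbb Z$) that are affine on each $[q_{j-1},q_j]$; $\underline V^h=[V^h]^2$; $\underline V^h_\partial=\{\vec\eta\in\underline V^h:\vec\eta(\rho)\cdot\vec e_1=0\ \forall\rho\in\partial_0I;\ \vec\eta(\rho)\cdot\vec e_i=0\ \forall\rho\in\partial_iI,\ i=1,2;\ \vec\eta(\rho)=\vec0\ \forall\rho\in\partial_DI\}$. $(\cdot,\cdot)$ is the $L^2(I)$ inner product (with dot product for vector functions), and for piecewise continuous $f,g$ the mass-lumped product is $(f,g)^h=\tfrac h2\sum_{j=1}^J[(fg)(q_j^-)+(fg)(q_{j-1}^+)]$. Two variants: in the "lumped" variant $(\cdot,\cdot)_\sharp=(\cdot,\cdot)^h$; in the "exact" variant $(\cdot,\cdot)_\sharp=(\cdot,\cdot)$.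 Assumption $(\mathfrak A)$: $|\vec X^m_\rho|>0$ a.e. on $I$ and $\vec X^m(\rho)\cdot\vec e_1>0$ for all $\rho\in\overline I\setminus\partial_0I$. *)

theory Defs
  imports "HOL-Analysis.Analysis"
begin

text \<open>Functions on the closure of I are represented as functions real => _ whose
  values are only relevant on [0,1]. The flag per selects I = R/Z (per = True)
  or I = (0,1) (per = False).\<close>

definition e1 :: "real \<times> real" where "e1 = (1, 0)"
definition e2 :: "real \<times> real" where "e2 = (0, 1)"

definition posp :: "real \<Rightarrow> real" where "posp r = max r 0"
definition negp :: "real \<Rightarrow> real" where "negp r = - max (- r) 0"

definition node :: "nat \<Rightarrow> nat \<Rightarrow> real" where "node J j = real j / real J"

definition bdry :: "bool \<Rightarrow> real set" where
  "bdry per = (if per then {} else {0, 1})"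

definition Vh :: "bool \<Rightarrow> nat \<Rightarrow> (real \<Rightarrow> 'a::real_normed_vector) set" where
  "Vh per J = {f. continuous_on {0..1} f
      \<and> (\<forall>j\<in>{1..J}. \<exists>a b. \<forall>x\<in>{node J (j - 1)..node J j}. f x = a + x *\<^sub>R b)
      \<and> (per \<longrightarrow> f 0 = f 1)}"

definition Vh_bd :: "bool \<Rightarrow> nat \<Rightarrow> real set \<Rightarrow> real set \<Rightarrow> real set \<Rightarrow> real set
     \<Rightarrow> (real \<Rightarrow> real \<times> real) set" where
  "Vh_bd per J PD P0 P1 P2 = {eta \<in> Vh per J.
      (\<forall>r\<in>P0. eta r \<bullet> e1 = 0) \<and> (\<forall>r\<in>P1. eta r \<bullet> e1 = 0)
      \<and> (\<forall>r\<in>P2. eta r \<bullet> e2 = 0) \<and> (\<forall>r\<in>PD. eta r = 0)}"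

text \<open>Derivative with respect to rho (exists away from the nodes).\<close>
definition drho :: "(real \<Rightarrow> real \<times> real) \<Rightarrow> real \<Rightarrow> real \<times> real" where
  "drho f r = vector_derivative f (at r)"

text \<open>Mass-lumped inner product applied to the (piecewise continuous) integrand F = f g:
  h/2 * sum_j [ F(q_j^-) + F(q_{j-1}^+) ].\<close>
definition lumped_ip :: "nat \<Rightarrow> (real \<Rightarrow> real) \<Rightarrow> real" where
  "lumped_ip J F = (1 / real J) / 2 *
     (\<Sum>j=1..J. Lim (at_left (node J j)) F + Lim (at_right (node J (j - 1))) F)"

definition exact_ip :: "(real \<Rightarrow> real) \<Rightarrow> real" where
  "exact_ip F = integral {0..1} F"

definition sharp_ip :: "bool \<Rightarrow> nat \<Rightarrow> (real \<Rightarrow> real) \<Rightarrow> real" where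
  "sharp_ip lump J F = (if lump then lumped_ip J F else exact_ip F)"

end

theory Submission
  imports Defs
begin

lemma l1_le_l2:
  fixes u :: "'i \<Rightarrow> real"
  shows "(\<Sum>i\<in>S. \<bar>u i\<bar>)\<^sup>2 \<le> real (card S) * (\<Sum>i\<in>S. (u i)\<^sup>2)"
proof -
  have "(\<Sum>i\<in>S. 1 * \<bar>u i\<bar>)\<^sup>2 \<le> (\<Sum>i\<in>S. 1\<^sup>2) * (\<Sum>i\<in>S. \<bar>u i\<bar>\<^sup>2)"
    by (rule Cauchy_Schwarz_ineq_sum)
  then show ?thesis by simp
qed

lemma contraction_zero:
  fixes \<Psi> :: "('i \<Rightarrow> real) \<Rightarrow> ('i \<Rightarrow> real) \<Rightarrow> real" and S :: "'i set"
  assumes fin: "finite S" and mu: "\<mu> > 0"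
    and add: "\<And>w u v. \<forall>i. i \<notin> S \<longrightarrow> w i = 0 \<Longrightarrow> \<forall>i. i \<notin> S \<longrightarrow> u i = 0 \<Longrightarrow> \<forall>i. i \<notin> S \<longrightarrow> v i = 0
          \<Longrightarrow> \<Psi> w (\<lambda>i. u i + v i) = \<Psi> w u + \<Psi> w v"
    and smul: "\<And>w u a. \<forall>i. i \<notin> S \<longrightarrow> w i = 0 \<Longrightarrow> \<forall>i. i \<notin> S \<longrightarrow> u i = 0 \<Longrightarrow> \<Psi> w (\<lambda>i. a * u i) = a * \<Psi> w u"
    and mono: "\<And>w w'. \<forall>i. i \<notin> S \<longrightarrow> w i = 0 \<Longrightarrow> \<forall>i. i \<notin> S \<longrightarrow> w' i = 0 \<Longrightarrow>
          \<Psi> w (\<lambda>i. w i - w' i) - \<Psi> w' (\<lambda>i. w i - w' i) \<ge> \<mu> * (\<Sum>i\<in>S. (w i - w' i)\<^sup>2)"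
    and lip: "\<And>w w' v. \<forall>i. i \<notin> S \<longrightarrow> w i = 0 \<Longrightarrow> \<forall>i. i \<notin> S \<longrightarrow> w' i = 0 \<Longrightarrow> \<forall>i. i \<notin> S \<longrightarrow> v i = 0 \<Longrightarrow>
          \<bar>\<Psi> w v - \<Psi> w' v\<bar> \<le> \<Lambda> * (\<Sum>i\<in>S. \<bar>w i - w' i\<bar>) * (\<Sum>i\<in>S. \<bar>v i\<bar>)"
  shows "\<exists>w. (\<forall>i. i \<notin> S \<longrightarrow> w i = 0) \<and> (\<forall>v. (\<forall>i. i \<notin> S \<longrightarrow> v i = 0) \<longrightarrow> \<Psi> w v = 0)"
proof -
  define W where "W = {w::'i\<Rightarrow>real. \<forall>i. i \<notin> S \<longrightarrow> w i = 0}"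
  have Wi: "w \<in> W \<longleftrightarrow> (\<forall>i. i \<notin> S \<longrightarrow> w i = 0)" for w unfolding W_def by simp
  define \<delta> where "\<delta> k = (\<lambda>i::'i. if i = k then 1 else (0::real))" for k
  have zero: "\<Psi> w (\<lambda>i. 0) = 0" if "w \<in> W" for w
    using smul[of w "\<lambda>i. 0" 0] that by (simp add: Wi)
  have rep: "\<Psi> w v = (\<Sum>k\<in>S. v k * \<Psi> w (\<delta> k))" if w: "w \<in> W" and v: "v \<in> W" for w v
  proof -
    have "T \<subseteq> S \<Longrightarrow> \<Psi> w (\<lambda>i. \<Sum>k\<in>T. v k * \<delta> k i) = (\<Sum>k\<in>T. v k * \<Psi> w (\<delta> k))" for T
    proof (induction T rule: infinite_finite_induct)
      case (infinite A) then show ?case using fin finite_subset by blast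
    next
      case empty then show ?case using zero[OF w] by simp
    next
      case (insert x F)
      have xS: "x \<in> S" using insert by auto
      have dW: "\<delta> x \<in> W" using xS by (auto simp: Wi \<delta>_def)
      have sW: "(\<lambda>i. \<Sum>k\<in>F. v k * \<delta> k i) \<in> W" using insert by (auto simp: Wi \<delta>_def intro!: sum.neutral)
      have "\<Psi> w (\<lambda>i. \<Sum>k\<in>insert x F. v k * \<delta> k i) = \<Psi> w (\<lambda>i. v x * \<delta> x i + (\<Sum>k\<in>F. v k * \<delta> k i))"
        using insert by simp
      also have "\<dots> = \<Psi> w (\<lambda>i. v x * \<delta> x i) + \<Psi> w (\<lambda>i. \<Sum>k\<in>F. v k * \<delta> k i)"
        apply (rule add) using w dW sW by (auto simp: Wi)
      also have "\<dots> = v x * \<Psi> w (\<delta> x) + (\<Sum>k\<in>F. v k * \<Psi> w (\<delta> k))"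
        using smul[of w "\<delta> x" "v x"] w dW insert by (auto simp: Wi)
      finally show ?case using insert by simp
    qed
    from this[of S] have "\<Psi> w (\<lambda>i. \<Sum>k\<in>S. v k * \<delta> k i) = (\<Sum>k\<in>S. v k * \<Psi> w (\<delta> k))" by simp
    moreover have "(\<lambda>i. \<Sum>k\<in>S. v k * \<delta> k i) = v"
    proof
      fix i show "(\<Sum>k\<in>S. v k * \<delta> k i) = v i"
        using v fin by (cases "i \<in> S") (auto simp: \<delta>_def Wi if_distrib cong: if_cong)
    qed
    ultimately show ?thesis by simp
  qed
  define \<gamma> where "\<gamma> w = (\<lambda>k. if k \<in> S then \<Psi> w (\<delta> k) else 0)" for w
  have \<gamma>W: "\<gamma> w \<in> W" for w by (auto simp: Wi \<gamma>_def)
  define Nr where "Nr u = (\<Sum>i\<in>S. (u i)\<^sup>2)" for u :: "'i \<Rightarrow> real"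
  have Nr_nn: "0 \<le> Nr u" for u unfolding Nr_def by (simp add: sum_nonneg)
  have Nr_ge: "(u i)\<^sup>2 \<le> Nr u" if "i \<in> S" for u i
    unfolding Nr_def using that fin by (intro member_le_sum) auto
  define n where "n = real (card S)"
  define K where "K = (\<bar>\<Lambda>\<bar> * n)\<^sup>2"
  have inner_rep: "(\<Sum>k\<in>S. u k * (\<gamma> w k - \<gamma> w' k)) = \<Psi> w u - \<Psi> w' u"
    if "w \<in> W" "w' \<in> W" "u \<in> W" for u w w'
    using rep[OF that(1,3)] rep[OF that(2,3)] by (simp add: \<gamma>_def right_diff_distrib sum_subtractf)
  have lipN: "Nr (\<lambda>i. \<gamma> w i - \<gamma> w' i) \<le> K * Nr (\<lambda>i. w i - w' i)" if w: "w \<in> W" and w': "w' \<in> W" for w w'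
  proof -
    define g where "g = (\<lambda>i. \<gamma> w i - \<gamma> w' i)"
    have gW: "g \<in> W" using \<gamma>W by (auto simp: Wi g_def)
    have DW: "(\<lambda>i. w i - w' i) \<in> W" using w w' by (auto simp: Wi)
    have "Nr g = (\<Sum>k\<in>S. g k * (\<gamma> w k - \<gamma> w' k))" by (simp add: Nr_def g_def power2_eq_square)
    also have "\<dots> = \<Psi> w g - \<Psi> w' g" by (rule inner_rep[OF w w' gW])
    also have "\<dots> \<le> \<bar>\<Lambda>\<bar> * (\<Sum>i\<in>S. \<bar>w i - w' i\<bar>) * (\<Sum>i\<in>S. \<bar>g i\<bar>)"
    proof -
      have "\<Psi> w g - \<Psi> w' g \<le> \<Lambda> * (\<Sum>i\<in>S. \<bar>w i - w' i\<bar>) * (\<Sum>i\<in>S. \<bar>g i\<bar>)"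
        using lip[of w w' g] w w' gW by (auto simp: Wi)
      also have "\<dots> \<le> \<bar>\<Lambda>\<bar> * (\<Sum>i\<in>S. \<bar>w i - w' i\<bar>) * (\<Sum>i\<in>S. \<bar>g i\<bar>)"
        by (intro mult_right_mono) (auto simp: sum_nonneg)
      finally show ?thesis .
    qed
    also have "\<dots> \<le> \<bar>\<Lambda>\<bar> * sqrt (n * Nr (\<lambda>i. w i - w' i)) * sqrt (n * Nr g)"
    proof -
      have a: "(\<Sum>i\<in>S. \<bar>u i\<bar>) \<le> sqrt (n * Nr u)" for u
        using l1_le_l2[of u S] unfolding n_def Nr_def
        by (metis abs_of_nonneg real_le_rsqrt sum_nonneg abs_ge_zero)
      show ?thesis
        using Nr_nn by (intro mult_mono a) (auto simp: sum_nonneg n_def)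
    qed
    also have "\<dots> = \<bar>\<Lambda>\<bar> * n * sqrt (Nr (\<lambda>i. w i - w' i)) * sqrt (Nr g)"
      by (simp add: real_sqrt_mult n_def)
    finally have *: "Nr g \<le> \<bar>\<Lambda>\<bar> * n * sqrt (Nr (\<lambda>i. w i - w' i)) * sqrt (Nr g)" .
    have "sqrt (Nr g) \<le> \<bar>\<Lambda>\<bar> * n * sqrt (Nr (\<lambda>i. w i - w' i))"
    proof (cases "Nr g = 0")
      case True then show ?thesis by (simp add: n_def Nr_nn)
    next
      case False
      then have pos: "sqrt (Nr g) > 0" using Nr_nn[of g] by simp
      have e: "sqrt (Nr g) * sqrt (Nr g) = Nr g" using Nr_nn[of g] by simp
      have "sqrt (Nr g) * sqrt (Nr g) \<le> (\<bar>\<Lambda>\<bar> * n * sqrt (Nr (\<lambda>i. w i - w' i))) * sqrt (Nr g)"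
        using * unfolding e by simp
      then show ?thesis using pos by (rule mult_right_le_imp_le)
    qed
    then have "(sqrt (Nr g))\<^sup>2 \<le> (\<bar>\<Lambda>\<bar> * n * sqrt (Nr (\<lambda>i. w i - w' i)))\<^sup>2"
      using Nr_nn[of g] by (intro power_mono) auto
    then show ?thesis using Nr_nn by (simp add: K_def g_def power_mult_distrib)
  qed
  define \<tau> where "\<tau> = \<mu> / (K + \<mu>\<^sup>2)"
  have Kn: "K \<ge> 0" by (simp add: K_def)
  have Kp: "K + \<mu>\<^sup>2 > 0" using mu Kn by (simp add: add_nonneg_pos)
  have taup: "\<tau> > 0" using mu Kp by (simp add: \<tau>_def)
  define q where "q = 1 - \<mu>\<^sup>2 / (K + \<mu>\<^sup>2)"
  have q0: "0 \<le> q" using Kn Kp by (simp add: q_def field_simps)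
  have q1: "q < 1" using mu Kp by (simp add: q_def)
  define G where "G w = (\<lambda>i. w i - \<tau> * \<gamma> w i)" for w
  have GW: "G w \<in> W" if "w \<in> W" for w using that \<gamma>W by (auto simp: Wi G_def)
  have contr: "Nr (\<lambda>i. G w i - G w' i) \<le> q * Nr (\<lambda>i. w i - w' i)" if w: "w \<in> W" and w': "w' \<in> W" for w w'
  proof -
    define D where "D = (\<lambda>i. w i - w' i)"
    define g where "g = (\<lambda>i. \<gamma> w i - \<gamma> w' i)"
    have DW: "D \<in> W" using w w' by (auto simp: Wi D_def)
    have "Nr (\<lambda>i. G w i - G w' i) = Nr D - 2 * \<tau> * (\<Sum>k\<in>S. D k * g k) + \<tau>\<^sup>2 * Nr g"
      unfolding Nr_def G_def D_def g_def
      by (simp add: power2_eq_square algebra_simps sum.distrib sum_subtractf sum_distrib_left)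
    also have "(\<Sum>k\<in>S. D k * g k) = \<Psi> w D - \<Psi> w' D" unfolding g_def by (rule inner_rep[OF w w' DW])
    also have "\<Psi> w D - \<Psi> w' D \<ge> \<mu> * Nr D" using mono[of w w'] w w' by (simp add: Wi D_def Nr_def)
    then have "Nr D - 2 * \<tau> * (\<Psi> w D - \<Psi> w' D) + \<tau>\<^sup>2 * Nr g \<le> Nr D - 2 * \<tau> * (\<mu> * Nr D) + \<tau>\<^sup>2 * (K * Nr D)"
      using lipN[OF w w'] taup unfolding D_def g_def
      by (intro add_mono diff_mono order_refl mult_left_mono) auto
    also have "\<dots> = (1 - 2 * \<tau> * \<mu> + \<tau>\<^sup>2 * K) * Nr D" by (simp add: algebra_simps)
    also have "\<dots> \<le> q * Nr D"
    proof (intro mult_right_mono Nr_nn)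
      have "\<tau>\<^sup>2 * K \<le> \<tau>\<^sup>2 * (K + \<mu>\<^sup>2)" by (intro mult_left_mono) auto
      also have "\<dots> = \<tau> * (\<tau> * (K + \<mu>\<^sup>2))" by (simp add: power2_eq_square)
      also have "\<tau> * (K + \<mu>\<^sup>2) = \<mu>" using Kp by (simp add: \<tau>_def)
      finally have "1 - 2 * \<tau> * \<mu> + \<tau>\<^sup>2 * K \<le> 1 - \<tau> * \<mu>" by (simp add: mult.commute)
      also have "\<dots> = q" using Kp by (simp add: \<tau>_def q_def power2_eq_square)
      finally show "1 - 2 * \<tau> * \<mu> + \<tau>\<^sup>2 * K \<le> q" .
    qed
    finally show ?thesis by (simp add: D_def)
  qed
  define ws where "ws k = (G ^^ k) (\<lambda>i. 0)" for k
  have wsW: "ws k \<in> W" for k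
    by (induction k) (use GW in \<open>auto simp: ws_def Wi\<close>)
  have wsS: "ws (Suc k) = G (ws k)" for k by (simp add: ws_def)
  define C where "C = Nr (\<lambda>i. ws 1 i - ws 0 i)"
  have step: "Nr (\<lambda>i. ws (Suc k) i - ws k i) \<le> q ^ k * C" for k
  proof (induction k)
    case 0 then show ?case by (simp add: C_def)
  next
    case (Suc k)
    have "Nr (\<lambda>i. ws (Suc (Suc k)) i - ws (Suc k) i) \<le> q * Nr (\<lambda>i. ws (Suc k) i - ws k i)"
      unfolding wsS[of "Suc k"] wsS[of k] using contr[OF GW[OF wsW[of k]] wsW[of k]] .
    also have "\<dots> \<le> q * (q ^ k * C)" using Suc q0 by (intro mult_left_mono) auto
    finally show ?case by simp
  qed
  have C0: "C \<ge> 0" by (simp add: C_def Nr_nn)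
  have conv: "\<exists>L. (\<lambda>k. ws k i) \<longlonglongrightarrow> L" for i
  proof (cases "i \<in> S")
    case False
    then show ?thesis using wsW by (auto simp: Wi)
  next
    case True
    have bd: "norm (ws (Suc k) i - ws k i) \<le> sqrt C * sqrt q ^ k" for k
    proof -
      have "\<bar>ws (Suc k) i - ws k i\<bar> = sqrt ((ws (Suc k) i - ws k i)\<^sup>2)" by simp
      also have "\<dots> \<le> sqrt (q ^ k * C)"
        using Nr_ge[OF True, of "\<lambda>i. ws (Suc k) i - ws k i"] step[of k]
        by (intro real_sqrt_le_mono) auto
      also have "\<dots> = sqrt C * sqrt q ^ k" by (simp add: real_sqrt_mult real_sqrt_power)
      finally show ?thesis by simp
    qed
    have sg: "summable (\<lambda>k. sqrt C * sqrt q ^ k)"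
      using q0 q1 by (intro summable_mult summable_geometric) auto
    have sm: "summable (\<lambda>k. ws (Suc k) i - ws k i)"
    proof (rule summable_comparison_test)
      show "\<exists>N. \<forall>n\<ge>N. norm (ws (Suc n) i - ws n i) \<le> sqrt C * sqrt q ^ n" using bd by blast
    qed (rule sg)
    have tel: "(\<Sum>l<n. ws (Suc l) i - ws l i) = ws n i - ws 0 i" for n
      using sum_lessThan_telescope[where f="\<lambda>l. ws l i"] by simp
    from summable_LIMSEQ[OF sm] have "(\<lambda>k. ws k i - ws 0 i) \<longlonglongrightarrow> suminf (\<lambda>k. ws (Suc k) i - ws k i)"
      by (simp add: tel)
    then show ?thesis by (auto simp: ws_def)
  qed
  define ww where "ww i = lim (\<lambda>k. ws k i)" for i
  have wwL: "(\<lambda>k. ws k i) \<longlonglongrightarrow> ww i" for i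
    using conv[of i] unfolding ww_def by (auto simp: convergent_def convergent_LIMSEQ_iff[symmetric])
  have wwW: "ww \<in> W"
  proof -
    have "ww i = 0" if "i \<notin> S" for i
    proof -
      have "(\<lambda>k. ws k i) = (\<lambda>k. 0)" using wsW that by (auto simp: Wi)
      then have "(\<lambda>k. 0::real) \<longlonglongrightarrow> ww i" using wwL[of i] by simp
      then show ?thesis by (simp add: LIMSEQ_const_iff)
    qed
    then show ?thesis by (auto simp: Wi)
  qed
  have NrL: "(\<lambda>k. Nr (\<lambda>i. ws k i - ww i)) \<longlonglongrightarrow> 0"
  proof -
    have "(\<lambda>k. \<Sum>i\<in>S. (ws k i - ww i)\<^sup>2) \<longlonglongrightarrow> (\<Sum>i\<in>S. (ww i - ww i)\<^sup>2)"
      by (intro tendsto_intros wwL)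
    then show ?thesis by (simp add: Nr_def)
  qed
  have fixp: "G ww i = ww i" for i
  proof -
    have "(\<lambda>k. G (ws k) i - G ww i) \<longlonglongrightarrow> 0"
    proof (cases "i \<in> S")
      case False
      then show ?thesis using GW wsW wwW by (auto simp: Wi)
    next
      case True
      have sq: "(\<lambda>k. sqrt (Nr (\<lambda>i. ws k i - ww i))) \<longlonglongrightarrow> 0"
        using tendsto_real_sqrt[OF NrL] by simp
      have le: "\<bar>G (ws k) i - G ww i\<bar> \<le> sqrt (Nr (\<lambda>i. ws k i - ww i))" for k
      proof -
        have "\<bar>G (ws k) i - G ww i\<bar> = sqrt ((G (ws k) i - G ww i)\<^sup>2)" by (rule real_sqrt_abs[symmetric])
        also have "\<dots> \<le> sqrt (Nr (\<lambda>i. G (ws k) i - G ww i))"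
          by (intro real_sqrt_le_mono Nr_ge True)
        also have "\<dots> \<le> sqrt (q * Nr (\<lambda>i. ws k i - ww i))"
          by (intro real_sqrt_le_mono contr wsW wwW)
        also have "\<dots> \<le> sqrt (Nr (\<lambda>i. ws k i - ww i))"
        proof (rule real_sqrt_le_mono)
          show "q * Nr (\<lambda>i. ws k i - ww i) \<le> Nr (\<lambda>i. ws k i - ww i)"
            by (rule mult_left_le_one_le[OF Nr_nn q0]) (use q1 in linarith)
        qed
        finally show ?thesis .
      qed
      have "(\<lambda>k. \<bar>G (ws k) i - G ww i\<bar>) \<longlonglongrightarrow> 0"
      proof (rule tendsto_sandwich[OF always_eventually always_eventually tendsto_const sq])
        show "\<forall>k. 0 \<le> \<bar>G (ws k) i - G ww i\<bar>" by simp
        show "\<forall>k. \<bar>G (ws k) i - G ww i\<bar> \<le> sqrt (Nr (\<lambda>i. ws k i - ww i))" using le by blast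
      qed
      then show ?thesis by (simp only: tendsto_rabs_zero_iff)
    qed
    then have "(\<lambda>k. G (ws k) i) \<longlonglongrightarrow> G ww i"
      by (rule LIM_zero_cancel)
    moreover have "(\<lambda>k. G (ws k) i) \<longlonglongrightarrow> ww i"
      using wwL[of i] unfolding wsS[symmetric] by (rule LIMSEQ_Suc)
    ultimately show ?thesis using LIMSEQ_unique by blast
  qed
  have g0: "\<gamma> ww k = 0" for k
    using fixp[of k] taup by (simp add: G_def)
  show ?thesis
  proof (rule exI[of _ ww], rule conjI)
    show "\<forall>i. i \<notin> S \<longrightarrow> ww i = 0" using wwW by (simp add: Wi)
    show "\<forall>v. (\<forall>i. i \<notin> S \<longrightarrow> v i = 0) \<longrightarrow> \<Psi> ww v = 0"
    proof (intro allI impI)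
    fix v :: "'i \<Rightarrow> real" assume "\<forall>i. i \<notin> S \<longrightarrow> v i = 0"
    then have "v \<in> W" by (simp add: Wi)
    then show "\<Psi> ww v = 0"
    proof -
      have "\<Psi> ww (\<delta> k) = 0" if "k \<in> S" for k using g0[of k] that by (simp add: \<gamma>_def)
      then show ?thesis using rep[OF wwW \<open>v \<in> W\<close>] by simp
    qed
    qed
  qed
qed

definition hatf :: "nat \<Rightarrow> nat \<Rightarrow> real \<Rightarrow> real" where
  "hatf J i t = max 0 (1 - \<bar>t * real J - real i\<bar>)"
definition interp :: "nat \<Rightarrow> (nat \<Rightarrow> real \<times> real) \<Rightarrow> real \<Rightarrow> real \<times> real" where
  "interp J c t = (\<Sum>i\<le>J. hatf J i t *\<^sub>R c i)"
definition affc :: "nat \<Rightarrow> (nat \<Rightarrow> real \<times> real) \<Rightarrow> nat \<Rightarrow> real \<Rightarrow> real \<times> real" where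
  "affc J c j t = c (j - 1) + ((t - node J (j - 1)) * real J) *\<^sub>R (c j - c (j - 1))"
definition slc :: "nat \<Rightarrow> (nat \<Rightarrow> real \<times> real) \<Rightarrow> nat \<Rightarrow> real \<times> real" where
  "slc J c j = real J *\<^sub>R (c j - c (j - 1))"
definition nv :: "nat \<Rightarrow> (real \<Rightarrow> real \<times> real) \<Rightarrow> nat \<Rightarrow> real \<times> real" where
  "nv J f i = f (node J i)"

lemma lin2: "(1 - s) *\<^sub>R a + s *\<^sub>R b = a + s *\<^sub>R (b - a)" for a b :: "'a::real_vector"
  by (simp add: algebra_simps)

lemma lin3: "a + ((x - q) * k) *\<^sub>R d = (a - (q * k) *\<^sub>R d) + x *\<^sub>R (k *\<^sub>R d)" for a d :: "'a::real_vector"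
  by (simp add: algebra_simps scaleR_diff_left)

lemma node_diff: "J > 0 \<Longrightarrow> j \<ge> 1 \<Longrightarrow> node J j - node J (j - 1) = 1 / real J"
  by (simp add: node_def of_nat_diff field_simps)

lemma node_le: "J > 0 \<Longrightarrow> j \<ge> 1 \<Longrightarrow> node J (j - 1) < node J j"
proof -
  assume a: "J > 0" "j \<ge> 1"
  have "node J j - node J (j - 1) = 1 / real J" by (rule node_diff[OF a])
  moreover have "1 / real J > 0" using a by simp
  ultimately show ?thesis by linarith
qed

lemma node_mono: "J > 0 \<Longrightarrow> i \<le> j \<Longrightarrow> node J i \<le> node J j"
  by (simp add: node_def divide_right_mono)

lemma node_0 [simp]: "node J 0 = 0" by (simp add: node_def)
lemma node_J [simp]: "J > 0 \<Longrightarrow> node J J = 1" by (simp add: node_def)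

lemma el_sub: "J > 0 \<Longrightarrow> j \<in> {1..J} \<Longrightarrow> {node J (j - 1)..node J j} \<subseteq> {0..1}"
  using node_mono[of J 0 "j - 1"] node_mono[of J j J] by auto

lemma affc_at_left [simp]: "affc J c j (node J (j - 1)) = c (j - 1)"
  by (simp add: affc_def)

lemma affc_at_right: "J > 0 \<Longrightarrow> j \<ge> 1 \<Longrightarrow> affc J c j (node J j) = c j"
proof -
  assume a: "J > 0" "j \<ge> 1"
  have "node J j - node J (j - 1) = 1 / real J" by (rule node_diff[OF a])
  then show ?thesis using a unfolding affc_def by simp
qed

lemma Vh_affine:
  assumes f: "f \<in> Vh per J" and J: "J > 0" and j: "j \<in> {1..J}"
    and t: "t \<in> {node J (j - 1)..node J j}"
  shows "f t = affc J (nv J f) j t"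
proof -
  from f j obtain a b where ab: "\<forall>x\<in>{node J (j - 1)..node J j}. f x = a + x *\<^sub>R b"
    unfolding Vh_def by blast
  have l: "node J (j - 1) < node J j" using node_le[OF J] j by auto
  have fa: "f (node J (j - 1)) = a + node J (j - 1) *\<^sub>R b" using ab l by auto
  have fb: "f (node J j) = a + node J j *\<^sub>R b" using ab l by auto
  have ft: "f t = a + t *\<^sub>R b" using ab t by auto
  have d: "node J j - node J (j - 1) = 1 / real J" using node_diff[OF J] j by auto
  have "f (node J j) - f (node J (j - 1)) = node J j *\<^sub>R b - node J (j - 1) *\<^sub>R b"
    unfolding fa fb by (simp add: algebra_simps)
  also have "\<dots> = (node J j - node J (j - 1)) *\<^sub>R b" by (simp only: scaleR_diff_left)
  finally have fd: "f (node J j) - f (node J (j - 1)) = (1 / real J) *\<^sub>R b" by (simp only: d)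
  have "affc J (nv J f) j t = (a + node J (j - 1) *\<^sub>R b) + ((t - node J (j - 1)) * real J) *\<^sub>R ((1 / real J) *\<^sub>R b)"
    unfolding affc_def nv_def fd unfolding fa ..
  also have "\<dots> = (a + node J (j - 1) *\<^sub>R b) + (t - node J (j - 1)) *\<^sub>R b" using J by simp
  also have "\<dots> = a + t *\<^sub>R b" by (simp add: scaleR_diff_left)
  finally show ?thesis using ft by simp
qed

lemma affc_vd: "((affc J c j) has_vector_derivative slc J c j) (at t within S)"
  unfolding affc_def slc_def
  by (auto intro!: derivative_eq_intros)

lemma Vh_drho:
  assumes f: "f \<in> Vh per J" and J: "J > 0" and j: "j \<in> {1..J}"
    and t: "t \<in> {node J (j - 1)<..<node J j}"
  shows "drho f t = slc J (nv J f) j"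
proof -
  have "(f has_vector_derivative slc J (nv J f) j) (at t)"
  proof (rule has_vector_derivative_transform_within_open)
    show "(affc J (nv J f) j has_vector_derivative slc J (nv J f) j) (at t)" by (rule affc_vd)
    show "open {node J (j - 1)<..<node J j}" by simp
    show "t \<in> {node J (j - 1)<..<node J j}" by (rule t)
    show "affc J (nv J f) j y = f y" if "y \<in> {node J (j - 1)<..<node J j}" for y
      using Vh_affine[OF f J j, of y] that by auto
  qed
  then show ?thesis unfolding drho_def by (rule vector_derivative_at)
qed

lemma hat_el:
  assumes J: "J > 0" and j: "j \<in> {1..J}" and t: "t \<in> {node J (j - 1)..node J j}"
  shows "hatf J i t = (if i = j - 1 then real j - t * real J else if i = j then t * real J - real (j - 1) else 0)"
proof -
  have tJ: "real (j - 1) \<le> t * real J" "t * real J \<le> real j"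
    using t J by (auto simp: node_def field_simps)
  have jj: "real (j - 1) = real j - 1" using j by (simp add: of_nat_diff)
  show ?thesis
  proof (cases "i = j - 1")
    case True then show ?thesis using tJ jj by (simp add: hatf_def)
  next
    case F1: False
    show ?thesis
    proof (cases "i = j")
      case True then show ?thesis using tJ jj F1 by (simp add: hatf_def)
    next
      case False
      then have "i < j - 1 \<or> i > j" using F1 by auto
      then have "real i \<le> real j - 2 \<or> real i \<ge> real j + 1" using j by auto
      then show ?thesis using tJ jj F1 False by (auto simp: hatf_def)
    qed
  qed
qed

lemma interp_el:
  assumes J: "J > 0" and j: "j \<in> {1..J}" and t: "t \<in> {node J (j - 1)..node J j}"
  shows "interp J c t = affc J c j t"
proof -
  have jj: "j - 1 \<noteq> j" using j by auto
  have "interp J c t = (\<Sum>i\<in>{j - 1, j}. hatf J i t *\<^sub>R c i)"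
    unfolding interp_def
    by (rule sum.mono_neutral_right) (use j hat_el[OF J j t] in auto)
  also have "\<dots> = (real j - t * real J) *\<^sub>R c (j - 1) + (t * real J - real (j - 1)) *\<^sub>R c j"
    using jj hat_el[OF J j t] by simp
  also have "\<dots> = affc J c j t"
  proof -
    have j1: "1 \<le> j" using j by auto
    have e2: "real (j - 1) = real j - 1" by (metis j1 of_nat_1 of_nat_diff)
    have e: "(t - node J (j - 1)) * real J = t * real J - (real j - 1)"
      using J unfolding node_def e2 by (simp add: field_simps)
    define s where "s = t * real J - (real j - 1)"
    have eqs: "real j - t * real J = 1 - s" "t * real J - real (j - 1) = s" unfolding s_def e2 by simp_all
    have "(real j - t * real J) *\<^sub>R c (j - 1) + (t * real J - real (j - 1)) *\<^sub>R c j
        = (1 - s) *\<^sub>R c (j - 1) + s *\<^sub>R c j" by (simp only: eqs)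
    also have "\<dots> = c (j - 1) + s *\<^sub>R (c j - c (j - 1))" by (rule lin2)
    also have "\<dots> = affc J c j t" unfolding affc_def e s_def by simp
    finally show ?thesis .
  qed
  finally show ?thesis .
qed

lemma interp_node: "J > 0 \<Longrightarrow> i \<le> J \<Longrightarrow> interp J c (node J i) = c i"
proof -
  assume J: "J > 0" and i: "i \<le> J"
  show ?thesis
  proof (cases "i = 0")
    case True
    have "interp J c (node J 0) = affc J c 1 (node J 0)"
      using J node_mono[of J 0 1] by (intro interp_el) auto
    also have "\<dots> = c 0" using affc_at_left[of J c 1] by simp
    finally show ?thesis using True by simp
  next
    case False
    then have "interp J c (node J i) = affc J c i (node J i)"
      using J i node_le[of J i] by (intro interp_el) auto
    then show ?thesis using False J by (simp add: affc_at_right)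
  qed
qed

lemma interp_Vh:
  assumes J: "J > 0" and per: "per \<longrightarrow> c J = c 0"
  shows "interp J c \<in> Vh per J"
  unfolding Vh_def
proof (intro CollectI conjI ballI impI)
  show "continuous_on {0..1} (interp J c)"
    unfolding interp_def hatf_def by (intro continuous_intros)
  fix j assume j: "j \<in> {1..J}"
  show "\<exists>a b. \<forall>x\<in>{node J (j - 1)..node J j}. interp J c x = a + x *\<^sub>R b"
  proof (intro exI ballI)
    fix x assume x: "x \<in> {node J (j - 1)..node J j}"
    show "interp J c x = (c (j - 1) - (node J (j - 1) * real J) *\<^sub>R (c j - c (j - 1))) + x *\<^sub>R (real J *\<^sub>R (c j - c (j - 1)))"
      using interp_el[OF J j x] unfolding affc_def by (simp only: lin3)
  qed
next
  assume "per"
  then show "interp J c 0 = interp J c 1"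
    using interp_node[OF J, of 0 c] interp_node[OF J, of J c] per J by simp
qed

lemma exact_split:
  assumes J: "J > 0"
    and G: "\<And>j. j \<in> {1..J} \<Longrightarrow> continuous_on {node J (j - 1)..node J j} (G j)"
    and FG: "\<And>j t. j \<in> {1..J} \<Longrightarrow> t \<in> {node J (j - 1)<..<node J j} \<Longrightarrow> F t = G j t"
  shows "exact_ip F = (\<Sum>j=1..J. integral {node J (j - 1)..node J j} (G j))"
proof -
  have "k \<le> J \<Longrightarrow> (F has_integral (\<Sum>j=1..k. integral {node J (j - 1)..node J j} (G j))) {0..node J k}" for k
  proof (induction k)
    case 0 then show ?case using has_integral_refl(2)[of F 0] by simp
  next
    case (Suc k)
    have j: "Suc k \<in> {1..J}" using Suc by auto
    have gi: "(G (Suc k) has_integral integral {node J k..node J (Suc k)} (G (Suc k))) {node J k..node J (Suc k)}"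
      using G[OF j] by (simp add: integrable_continuous_real integrable_integral)
    have el: "(F has_integral integral {node J k..node J (Suc k)} (G (Suc k))) {node J k..node J (Suc k)}"
      by (rule has_integral_spike_finite[where S = "{node J k, node J (Suc k)}", OF _ _ gi]) (use FG[OF j] in auto)
    have "(F has_integral (\<Sum>j=1..k. integral {node J (j - 1)..node J j} (G j)) + integral {node J k..node J (Suc k)} (G (Suc k))) {0..node J (Suc k)}"
      by (rule has_integral_combine[OF _ _ Suc.IH el]) (use Suc J node_mono[of J 0 k] node_mono[of J k "Suc k"] in auto)
    then show ?case by simp
  qed
  from this[of J] J show ?thesis unfolding exact_ip_def by (simp add: integral_unique)
qed

lemma left_lim:
  assumes J: "J > 0" and j: "j \<in> {1..J}"
    and G: "continuous_on {node J (j - 1)..node J j} G"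
    and FG: "\<And>t. t \<in> {node J (j - 1)<..<node J j} \<Longrightarrow> F t = G t"
  shows "Lim (at_left (node J j)) F = G (node J j)"
    and "Lim (at_right (node J (j - 1))) F = G (node J (j - 1))"
proof -
  have lt: "node J (j - 1) < node J j" using node_le[OF J] j by auto
  have "(G \<longlongrightarrow> G (node J j)) (at (node J j) within {node J (j - 1)..node J j})"
    using G lt unfolding continuous_on_def by auto
  then have "(G \<longlongrightarrow> G (node J j)) (at_left (node J j))"
    using lt by (simp add: at_within_Icc_at_left)
  moreover have "eventually (\<lambda>t. G t = F t) (at_left (node J j))"
    unfolding eventually_at_left_field using lt FG by (intro exI[of _ "node J (j - 1)"]) auto
  ultimately have "(F \<longlongrightarrow> G (node J j)) (at_left (node J j))"
    by (rule Lim_transform_eventually)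
  then show "Lim (at_left (node J j)) F = G (node J j)"
    by (intro tendsto_Lim) auto
  have "(G \<longlongrightarrow> G (node J (j - 1))) (at (node J (j - 1)) within {node J (j - 1)..node J j})"
    using G lt unfolding continuous_on_def by auto
  then have "(G \<longlongrightarrow> G (node J (j - 1))) (at_right (node J (j - 1)))"
    using lt by (simp add: at_within_Icc_at_right)
  moreover have "eventually (\<lambda>t. G t = F t) (at_right (node J (j - 1)))"
    unfolding eventually_at_right_field using lt FG by (intro exI[of _ "node J j"]) auto
  ultimately have "(F \<longlongrightarrow> G (node J (j - 1))) (at_right (node J (j - 1)))"
    by (rule Lim_transform_eventually)
  then show "Lim (at_right (node J (j - 1))) F = G (node J (j - 1))"
    by (intro tendsto_Lim) auto
qed

lemma lumped_split:
  assumes J: "J > 0"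
    and G: "\<And>j. j \<in> {1..J} \<Longrightarrow> continuous_on {node J (j - 1)..node J j} (G j)"
    and FG: "\<And>j t. j \<in> {1..J} \<Longrightarrow> t \<in> {node J (j - 1)<..<node J j} \<Longrightarrow> F t = G j t"
  shows "lumped_ip J F = (1 / real J) / 2 * (\<Sum>j=1..J. G j (node J j) + G j (node J (j - 1)))"
  unfolding lumped_ip_def
  using left_lim[OF J _ G FG] by (intro arg_cong2[where f="(*)"] refl sum.cong) auto

definition Gm :: "nat \<Rightarrow> (nat \<Rightarrow> real \<times> real) \<Rightarrow> real \<Rightarrow> (nat \<Rightarrow> real \<times> real) \<Rightarrow> (nat \<Rightarrow> real \<times> real) \<Rightarrow> nat \<Rightarrow> real \<Rightarrow> real" where
  "Gm J Xn dt c e j t = ((affc J Xn j t \<bullet> e1) *\<^sub>R ((1 / dt) *\<^sub>R affc J c j t)) \<bullet> (norm (slc J Xn j) *\<^sub>R affc J e j t)"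
definition G1 :: "nat \<Rightarrow> (nat \<Rightarrow> real \<times> real) \<Rightarrow> (nat \<Rightarrow> real \<times> real) \<Rightarrow> (nat \<Rightarrow> real \<times> real) \<Rightarrow> nat \<Rightarrow> real \<Rightarrow> real" where
  "G1 J Xn c e j t = (affc J e j t \<bullet> e1) * norm (slc J (\<lambda>i. Xn i + c i) j)"
definition G2 :: "nat \<Rightarrow> (nat \<Rightarrow> real \<times> real) \<Rightarrow> (nat \<Rightarrow> real \<times> real) \<Rightarrow> (nat \<Rightarrow> real \<times> real) \<Rightarrow> nat \<Rightarrow> real \<Rightarrow> real" where
  "G2 J Xn c e j t = ((affc J Xn j t \<bullet> e1) *\<^sub>R slc J (\<lambda>i. Xn i + c i) j) \<bullet> (inverse (norm (slc J Xn j)) *\<^sub>R slc J e j)"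
definition ev :: "nat \<Rightarrow> (nat \<Rightarrow> real \<times> real) \<Rightarrow> real \<Rightarrow> real \<times> real" where
  "ev J c p = (if p = 0 then c 0 else c J)"
definition el :: "nat \<Rightarrow> nat \<Rightarrow> real set" where
  "el J j = {node J (j - 1)..node J j}"

definition Phi where
  "Phi lump J Xn dt P1 P2 rh c e =
    (if lump then (1 / real J) / 2 * (\<Sum>j=1..J. Gm J Xn dt c e j (node J j) + Gm J Xn dt c e j (node J (j - 1)))
     else (\<Sum>j=1..J. integral (el J j) (Gm J Xn dt c e j)))
    + (\<Sum>j=1..J. integral (el J j) (G1 J Xn c e j))
    + (\<Sum>j=1..J. integral (el J j) (G2 J Xn c e j))
    + (\<Sum>p\<in>P1. rh p * (ev J Xn p \<bullet> e1) * (ev J e p \<bullet> e2))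
    + (\<Sum>p\<in>P2. ((posp (rh p) *\<^sub>R (ev J Xn p + ev J c p) + negp (rh p) *\<^sub>R ev J Xn p) \<bullet> e1) * (ev J e p \<bullet> e1))"

lemma affc_cont: "continuous_on S (affc J c j)"
  unfolding affc_def by (intro continuous_intros)

lemma Gm_cont: "continuous_on S (Gm J Xn dt c e j)"
  unfolding Gm_def by (intro continuous_intros affc_cont)
lemma G1_cont: "continuous_on S (G1 J Xn c e j)"
  unfolding G1_def by (intro continuous_intros affc_cont)
lemma G2_cont: "continuous_on S (G2 J Xn c e j)"
  unfolding G2_def by (intro continuous_intros affc_cont)

lemma Vh_add:
  assumes "f \<in> Vh per J" "g \<in> Vh per J"
  shows "(\<lambda>r. f r + g r) \<in> Vh per J"
proof -
  have c: "continuous_on {0..1} f" "continuous_on {0..1} g" using assms by (auto simp: Vh_def)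
  show ?thesis unfolding Vh_def
  proof (intro CollectI conjI ballI impI)
    show "continuous_on {0..1} (\<lambda>r. f r + g r)" using c by (intro continuous_intros)
    fix j assume j: "j \<in> {1..J}"
    from assms(1) j obtain a b where ab: "\<forall>x\<in>{node J (j - 1)..node J j}. f x = a + x *\<^sub>R b" unfolding Vh_def by blast
    from assms(2) j obtain a' b' where ab': "\<forall>x\<in>{node J (j - 1)..node J j}. g x = a' + x *\<^sub>R b'" unfolding Vh_def by blast
    show "\<exists>a b. \<forall>x\<in>{node J (j - 1)..node J j}. f x + g x = a + x *\<^sub>R b"
      using ab ab' by (intro exI[of _ "a + a'"] exI[of _ "b + b'"]) (simp add: scaleR_add_right)
  next
    assume per
    then show "f 0 + g 0 = f 1 + g 1" using assms by (auto simp: Vh_def)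
  qed
qed

lemma nv_node_ev:
  assumes J: "J > 0" and p: "p \<in> {0, 1}"
  shows "f p = ev J (nv J f) p"
  using p J by (auto simp: ev_def nv_def)

lemma bridge:
  assumes J: "J > 0" and X: "X \<in> Vh per J" and cper: "per \<longrightarrow> c J = c 0"
    and eta: "eta \<in> Vh per J" and P: "P1 \<subseteq> {0, 1}" "P2 \<subseteq> {0, 1}"
  shows "sharp_ip lump J (\<lambda>r. ((X r \<bullet> e1) *\<^sub>R ((1 / dt) *\<^sub>R ((X r + interp J c r) - X r))) \<bullet> (norm (drho X r) *\<^sub>R eta r))
     + exact_ip (\<lambda>r. (eta r \<bullet> e1) * norm (drho (\<lambda>r. X r + interp J c r) r))
     + exact_ip (\<lambda>r. ((X r \<bullet> e1) *\<^sub>R drho (\<lambda>r. X r + interp J c r) r) \<bullet> (inverse (norm (drho X r)) *\<^sub>R drho eta r))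
     + (\<Sum>p\<in>P1. rh p * (X p \<bullet> e1) * (eta p \<bullet> e2))
     + (\<Sum>p\<in>P2. ((posp (rh p) *\<^sub>R (X p + interp J c p) + negp (rh p) *\<^sub>R X p) \<bullet> e1) * (eta p \<bullet> e1))
   = Phi lump J (nv J X) dt P1 P2 rh c (nv J eta)"
proof -
  define Xn where "Xn = nv J X"
  define en where "en = nv J eta"
  define X1 where "X1 = (\<lambda>r. X r + interp J c r)"
  have dV: "interp J c \<in> Vh per J" by (rule interp_Vh[OF J cper])
  have X1V: "X1 \<in> Vh per J" unfolding X1_def by (rule Vh_add[OF X dV])
  have nvX1: "nv J X1 i = Xn i + c i" if "i \<le> J" for i
    using interp_node[OF J that] by (simp add: nv_def X1_def Xn_def)
  have slX1: "slc J (nv J X1) j = slc J (\<lambda>i. Xn i + c i) j" if "j \<in> {1..J}" for j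
  proof -
    have a: "nv J X1 j = Xn j + c j" using that by (intro nvX1) auto
    have b: "nv J X1 (j - 1) = Xn (j - 1) + c (j - 1)" using that by (intro nvX1) auto
    show ?thesis unfolding slc_def a b ..
  qed
  have loc: "X t = affc J Xn j t \<and> interp J c t = affc J c j t \<and> eta t = affc J en j t
      \<and> drho X t = slc J Xn j \<and> drho X1 t = slc J (\<lambda>i. Xn i + c i) j \<and> drho eta t = slc J en j"
    if j: "j \<in> {1..J}" and t: "t \<in> {node J (j - 1)<..<node J j}" for j t
  proof -
    have tc: "t \<in> {node J (j - 1)..node J j}" using t by auto
    show ?thesis
      using Vh_affine[OF X J j tc] interp_el[OF J j tc] Vh_affine[OF eta J j tc]
        Vh_drho[OF X J j t] Vh_drho[OF X1V J j t] Vh_drho[OF eta J j t] slX1[OF j]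
      by (simp add: Xn_def en_def)
  qed
  have T1: "sharp_ip lump J (\<lambda>r. ((X r \<bullet> e1) *\<^sub>R ((1 / dt) *\<^sub>R ((X r + interp J c r) - X r))) \<bullet> (norm (drho X r) *\<^sub>R eta r))
     = (if lump then (1 / real J) / 2 * (\<Sum>j=1..J. Gm J Xn dt c en j (node J j) + Gm J Xn dt c en j (node J (j - 1)))
        else (\<Sum>j=1..J. integral (el J j) (Gm J Xn dt c en j)))"
  proof -
    have FG: "((X t \<bullet> e1) *\<^sub>R ((1 / dt) *\<^sub>R ((X t + interp J c t) - X t))) \<bullet> (norm (drho X t) *\<^sub>R eta t) = Gm J Xn dt c en j t"
      if "j \<in> {1..J}" "t \<in> {node J (j - 1)<..<node J j}" for j t
      using loc[OF that] by (simp add: Gm_def)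
    show ?thesis
      unfolding sharp_ip_def el_def
      using lumped_split[OF J Gm_cont FG] exact_split[OF J Gm_cont FG] by simp
  qed
  have T2: "exact_ip (\<lambda>r. (eta r \<bullet> e1) * norm (drho X1 r)) = (\<Sum>j=1..J. integral (el J j) (G1 J Xn c en j))"
  proof -
    have FG: "(eta t \<bullet> e1) * norm (drho X1 t) = G1 J Xn c en j t"
      if "j \<in> {1..J}" "t \<in> {node J (j - 1)<..<node J j}" for j t
      using loc[OF that] by (simp add: G1_def)
    show ?thesis unfolding el_def by (rule exact_split[OF J G1_cont FG])
  qed
  have T3: "exact_ip (\<lambda>r. ((X r \<bullet> e1) *\<^sub>R drho X1 r) \<bullet> (inverse (norm (drho X r)) *\<^sub>R drho eta r))
      = (\<Sum>j=1..J. integral (el J j) (G2 J Xn c en j))"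
  proof -
    have FG: "((X t \<bullet> e1) *\<^sub>R drho X1 t) \<bullet> (inverse (norm (drho X t)) *\<^sub>R drho eta t) = G2 J Xn c en j t"
      if "j \<in> {1..J}" "t \<in> {node J (j - 1)<..<node J j}" for j t
      using loc[OF that] by (simp add: G2_def)
    show ?thesis unfolding el_def by (rule exact_split[OF J G2_cont FG])
  qed
  have T4: "(\<Sum>p\<in>P1. rh p * (X p \<bullet> e1) * (eta p \<bullet> e2)) = (\<Sum>p\<in>P1. rh p * (ev J Xn p \<bullet> e1) * (ev J en p \<bullet> e2))"
    using P J by (intro sum.cong refl) (auto simp: ev_def nv_def Xn_def en_def)
  have T5: "(\<Sum>p\<in>P2. ((posp (rh p) *\<^sub>R (X p + interp J c p) + negp (rh p) *\<^sub>R X p) \<bullet> e1) * (eta p \<bullet> e1))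
     = (\<Sum>p\<in>P2. ((posp (rh p) *\<^sub>R (ev J Xn p + ev J c p) + negp (rh p) *\<^sub>R ev J Xn p) \<bullet> e1) * (ev J en p \<bullet> e1))"
  proof (intro sum.cong refl)
    fix p assume "p \<in> P2"
    then have "p = 0 \<or> p = 1" using P by auto
    then show "((posp (rh p) *\<^sub>R (X p + interp J c p) + negp (rh p) *\<^sub>R X p) \<bullet> e1) * (eta p \<bullet> e1)
      = ((posp (rh p) *\<^sub>R (ev J Xn p + ev J c p) + negp (rh p) *\<^sub>R ev J Xn p) \<bullet> e1) * (ev J en p \<bullet> e1)"
      using interp_node[OF J, of 0 c] interp_node[OF J, of J c] J
      by (auto simp: ev_def nv_def Xn_def en_def)
  qed
  show ?thesis
    unfolding Phi_def T1[unfolded X1_def] T2[unfolded X1_def] T3[unfolded X1_def] T4 T5 Xn_def[symmetric] en_def[symmetric] ..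
qed

lemma affc_add: "affc J (\<lambda>i. a i + b i) j t = affc J a j t + affc J b j t"
  unfolding affc_def by (simp add: algebra_simps)
lemma affc_diff: "affc J (\<lambda>i. a i - b i) j t = affc J a j t - affc J b j t"
  unfolding affc_def by (simp add: algebra_simps)
lemma affc_scale: "affc J (\<lambda>i. r *\<^sub>R a i) j t = r *\<^sub>R affc J a j t"
  unfolding affc_def by (simp add: algebra_simps)
lemma slc_add: "slc J (\<lambda>i. a i + b i) j = slc J a j + slc J b j"
  unfolding slc_def by (simp add: algebra_simps)
lemma slc_diff: "slc J (\<lambda>i. a i - b i) j = slc J a j - slc J b j"
  unfolding slc_def by (simp add: algebra_simps)
lemma slc_scale: "slc J (\<lambda>i. r *\<^sub>R a i) j = r *\<^sub>R slc J a j"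
  unfolding slc_def by (simp add: algebra_simps)

definition uu :: "nat \<Rightarrow> nat \<Rightarrow> real \<Rightarrow> real" where
  "uu J j t = (t - node J (j - 1)) * real J"

lemma affc_uu: "affc J c j t = (1 - uu J j t) *\<^sub>R c (j - 1) + uu J j t *\<^sub>R c j"
  unfolding affc_def uu_def by (simp add: algebra_simps)

lemma uu_range: "J > 0 \<Longrightarrow> j \<ge> 1 \<Longrightarrow> t \<in> el J j \<Longrightarrow> 0 \<le> uu J j t \<and> uu J j t \<le> 1"
proof -
  assume J: "J > 0" and j: "j \<ge> 1" and t: "t \<in> el J j"
  have d: "node J j - node J (j - 1) = 1 / real J" by (rule node_diff[OF J j])
  have "t - node J (j - 1) \<le> 1 / real J" "0 \<le> t - node J (j - 1)" using t d by (auto simp: el_def)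
  then show ?thesis using J by (auto simp: uu_def field_simps)
qed

lemma affc_norm_le:
  assumes "J > 0" "j \<ge> 1" "t \<in> el J j"
  shows "norm (affc J c j t) \<le> (1 - uu J j t) * norm (c (j - 1)) + uu J j t * norm (c j)"
proof -
  have u: "0 \<le> uu J j t" "uu J j t \<le> 1" using uu_range[OF assms] by auto
  have "norm (affc J c j t) \<le> norm ((1 - uu J j t) *\<^sub>R c (j - 1)) + norm (uu J j t *\<^sub>R c j)"
    unfolding affc_uu by (rule norm_triangle_ineq)
  also have "\<dots> = (1 - uu J j t) * norm (c (j - 1)) + uu J j t * norm (c j)" using u by simp
  finally show ?thesis .
qed

lemma affc_norm_le2:
  assumes "J > 0" "j \<ge> 1" "t \<in> el J j"
  shows "norm (affc J c j t) \<le> norm (c (j - 1)) + norm (c j)"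
proof -
  have u: "0 \<le> uu J j t" "uu J j t \<le> 1" using uu_range[OF assms] by auto
  have "(1 - uu J j t) * norm (c (j - 1)) \<le> norm (c (j - 1))" "uu J j t * norm (c j) \<le> norm (c j)"
    using u by (auto intro!: mult_left_le_one_le)
  then show ?thesis using affc_norm_le[OF assms, of c] by linarith
qed

lemma poly_integral:
  assumes J: "J > 0" and j: "j \<ge> 1"
  shows "((\<lambda>t. \<alpha> + uu J j t * \<beta> + (uu J j t)\<^sup>2 * \<gamma>) has_integral (1 / real J) * (\<alpha> + \<beta> / 2 + \<gamma> / 3)) (el J j)"
proof -
  define q where "q = node J (j - 1)"
  have d: "node J j = q + 1 / real J" using node_diff[OF J j] by (simp add: q_def)
  define F where "F t = \<alpha> * (t - q) + \<beta> * real J * (t - q)\<^sup>2 / 2 + \<gamma> * (real J)\<^sup>2 * (t - q) ^ 3 / 3" for t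
  have der: "(F has_vector_derivative (\<alpha> + uu J j t * \<beta> + (uu J j t)\<^sup>2 * \<gamma>)) (at t within S)" for t S
  proof -
    have "(F has_real_derivative (\<alpha> + uu J j t * \<beta> + (uu J j t)\<^sup>2 * \<gamma>)) (at t within S)"
      unfolding F_def uu_def q_def[symmetric]
      apply (rule derivative_eq_intros refl | simp)+
      apply (simp add: power2_eq_square field_simps)
      done
    then show ?thesis by (simp add: has_real_derivative_iff_has_vector_derivative)
  qed
  have "q \<le> node J j" using d J by simp
  then have "((\<lambda>t. \<alpha> + uu J j t * \<beta> + (uu J j t)\<^sup>2 * \<gamma>) has_integral (F (node J j) - F q)) (el J j)"
    unfolding el_def q_def[symmetric] by (intro fundamental_theorem_of_calculus der)
  moreover have "F (node J j) - F q = (1 / real J) * (\<alpha> + \<beta> / 2 + \<gamma> / 3)"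
    unfolding d F_def using J by (simp add: power2_eq_square power3_eq_cube field_simps)
  ultimately show ?thesis by simp
qed

lemma el_integrable: "continuous_on (el J j) f \<Longrightarrow> f integrable_on (el J j)" for f :: "real \<Rightarrow> real"
  unfolding el_def by (rule integrable_continuous_interval)

lemma content_el: "J > 0 \<Longrightarrow> j \<ge> 1 \<Longrightarrow> Henstock_Kurzweil_Integration.content (el J j) = 1 / real J"
  using node_diff[of J j] node_le[of J j] by (simp add: el_def)

lemma integral_bound_el:
  assumes J: "J > 0" and j: "j \<ge> 1" and c: "continuous_on (el J j) g"
    and B: "\<And>t. t \<in> el J j \<Longrightarrow> \<bar>g t\<bar> \<le> B"
  shows "\<bar>integral (el J j) g\<bar> \<le> (1 / real J) * B"
proof -
  have ne: "el J j \<noteq> {}" using node_le[OF J j] by (auto simp: el_def)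
  then obtain t where "t \<in> el J j" by auto
  then have B0: "0 \<le> B" using B[of t] by linarith
  have "norm (integral (el J j) g) \<le> B * Henstock_Kurzweil_Integration.content (cbox (node J (j - 1)) (node J j))"
    by (rule has_integral_bound[OF B0]) (use el_integrable[OF c] B in \<open>auto simp: el_def\<close>)
  then show ?thesis using content_el[OF J j] by (simp add: el_def mult.commute)
qed

lemma amgm_core:
  fixes x L dt m \<alpha> s :: real
  assumes m: "m > 0" and x: "x \<ge> m" and L: "L > 0" and dt: "dt > 0" and dt4: "dt < 4 * m\<^sup>2"
    and a: "\<alpha> \<ge> 0" and s: "s \<ge> 0"
  shows "\<alpha> * s \<le> (sqrt dt / (2 * m)) * (x * L / dt * \<alpha>\<^sup>2) + x / L * s\<^sup>2"
proof -
  define \<sigma> where "\<sigma> = sqrt dt"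
  have sp: "\<sigma> > 0" using dt by (simp add: \<sigma>_def)
  have dts: "dt = \<sigma>\<^sup>2" using dt by (simp add: \<sigma>_def)
  have th1: "\<sigma> / (2 * m) \<le> 1"
  proof -
    have "\<sigma>\<^sup>2 < (2 * m)\<^sup>2" using dt4 dts by (simp add: power_mult_distrib)
    then have "\<sigma> < 2 * m" using sp m by (smt (verit) power_mono)
    then show ?thesis using m by simp
  qed
  have "0 \<le> (L * \<alpha> - \<sigma> * s)\<^sup>2" by simp
  then have "2 * L * \<alpha> * \<sigma> * s \<le> L\<^sup>2 * \<alpha>\<^sup>2 + \<sigma>\<^sup>2 * s\<^sup>2"
    by (simp add: power2_eq_square algebra_simps)
  then have key: "2 * \<alpha> * s \<le> (L / \<sigma>) * \<alpha>\<^sup>2 + (\<sigma> / L) * s\<^sup>2"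
    using sp L by (simp add: field_simps power2_eq_square)
  have xm: "1 \<le> x / m" using x m by simp
  have "\<alpha> * s * 1 \<le> (\<alpha> * s) * (x / m)" by (rule mult_left_mono[OF xm]) (use a s in simp)
  then have "\<alpha> * s \<le> (x / m) * (\<alpha> * s)" by (simp add: mult.commute)
  also have "\<dots> = (x * \<sigma> / (2 * m)) * (2 * \<alpha> * s / \<sigma>)" using sp m by (simp add: field_simps)
  also have "\<dots> \<le> (x * \<sigma> / (2 * m)) * ((L / \<sigma>) * \<alpha>\<^sup>2 / \<sigma> + (\<sigma> / L) * s\<^sup>2 / \<sigma>)"
  proof (rule mult_left_mono)
    show "2 * \<alpha> * s / \<sigma> \<le> L / \<sigma> * \<alpha>\<^sup>2 / \<sigma> + \<sigma> / L * s\<^sup>2 / \<sigma>"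
    proof -
      have "2 * \<alpha> * s / \<sigma> \<le> ((L / \<sigma>) * \<alpha>\<^sup>2 + (\<sigma> / L) * s\<^sup>2) / \<sigma>"
        using key sp by (intro divide_right_mono) auto
      then show ?thesis by (simp only: add_divide_distrib)
    qed
    show "0 \<le> x * \<sigma> / (2 * m)" using x m sp by simp
  qed
  also have "\<dots> = (\<sigma> / (2 * m)) * (x * L / \<sigma>\<^sup>2 * \<alpha>\<^sup>2) + (\<sigma> / (2 * m)) * (x / L * s\<^sup>2)"
    using sp m L by (simp add: field_simps power2_eq_square)
  also have "\<dots> \<le> (\<sigma> / (2 * m)) * (x * L / \<sigma>\<^sup>2 * \<alpha>\<^sup>2) + x / L * s\<^sup>2"
  proof -
    have "0 \<le> x / L * s\<^sup>2" using x m L by simp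
    then have "(\<sigma> / (2 * m)) * (x / L * s\<^sup>2) \<le> x / L * s\<^sup>2" using th1 sp m
      by (intro mult_left_le_one_le) auto
    then show ?thesis by simp
  qed
  finally show ?thesis unfolding dts[symmetric] by (simp add: \<sigma>_def)
qed

lemma Gm_add: "Gm J Xn dt c (\<lambda>i. e i + e' i) j = (\<lambda>t. Gm J Xn dt c e j t + Gm J Xn dt c e' j t)"
  unfolding Gm_def affc_add by (simp add: scaleR_add_right inner_add_right)
lemma G1_add: "G1 J Xn c (\<lambda>i. e i + e' i) j = (\<lambda>t. G1 J Xn c e j t + G1 J Xn c e' j t)"
  unfolding G1_def affc_add by (simp add: inner_add_left distrib_right)
lemma G2_add: "G2 J Xn c (\<lambda>i. e i + e' i) j = (\<lambda>t. G2 J Xn c e j t + G2 J Xn c e' j t)"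
  unfolding G2_def slc_add by (simp add: scaleR_add_right inner_add_right)
lemma ev_add: "ev J (\<lambda>i. e i + e' i) p = ev J e p + ev J e' p"
  by (simp add: ev_def)
lemma Gm_scale: "Gm J Xn dt c (\<lambda>i. a *\<^sub>R e i) j = (\<lambda>t. a * Gm J Xn dt c e j t)"
  unfolding Gm_def affc_scale by (simp add: inner_scaleR_right algebra_simps)
lemma G1_scale: "G1 J Xn c (\<lambda>i. a *\<^sub>R e i) j = (\<lambda>t. a * G1 J Xn c e j t)"
  unfolding G1_def affc_scale by (simp add: inner_scaleR_left algebra_simps)
lemma G2_scale: "G2 J Xn c (\<lambda>i. a *\<^sub>R e i) j = (\<lambda>t. a * G2 J Xn c e j t)"
  unfolding G2_def slc_scale by (simp add: inner_scaleR_right algebra_simps)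
lemma ev_scale: "ev J (\<lambda>i. a *\<^sub>R e i) p = a *\<^sub>R ev J e p"
  by (simp add: ev_def)

lemma int_add_el: "integral (el J j) (\<lambda>t. f t + g t) = integral (el J j) f + integral (el J j) g"
  if "continuous_on (el J j) f" "continuous_on (el J j) g" for f g :: "real \<Rightarrow> real"
  by (rule integral_add) (use el_integrable that in auto)

lemma Phi_add:
  "Phi lump J Xn dt P1 P2 rh c (\<lambda>i. e i + e' i) = Phi lump J Xn dt P1 P2 rh c e + Phi lump J Xn dt P1 P2 rh c e'"
proof -
  have a: "integral (el J j) (Gm J Xn dt c (\<lambda>i. e i + e' i) j) = integral (el J j) (Gm J Xn dt c e j) + integral (el J j) (Gm J Xn dt c e' j)" for j
    unfolding Gm_add by (rule int_add_el) (rule Gm_cont)+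
  have b: "integral (el J j) (G1 J Xn c (\<lambda>i. e i + e' i) j) = integral (el J j) (G1 J Xn c e j) + integral (el J j) (G1 J Xn c e' j)" for j
    unfolding G1_add by (rule int_add_el) (rule G1_cont)+
  have c: "integral (el J j) (G2 J Xn c (\<lambda>i. e i + e' i) j) = integral (el J j) (G2 J Xn c e j) + integral (el J j) (G2 J Xn c e' j)" for j
    unfolding G2_add by (rule int_add_el) (rule G2_cont)+
  show ?thesis
    unfolding Phi_def a b c unfolding ev_add Gm_add
    by (simp add: sum.distrib inner_add_left distrib_left distrib_right algebra_simps)
qed

lemma Phi_scale:
  "Phi lump J Xn dt P1 P2 rh c (\<lambda>i. a *\<^sub>R e i) = a * Phi lump J Xn dt P1 P2 rh c e"
proof -
  have a: "integral (el J j) (Gm J Xn dt c (\<lambda>i. a *\<^sub>R e i) j) = a * integral (el J j) (Gm J Xn dt c e j)" for j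
    unfolding Gm_scale by simp
  have b: "integral (el J j) (G1 J Xn c (\<lambda>i. a *\<^sub>R e i) j) = a * integral (el J j) (G1 J Xn c e j)" for j
    unfolding G1_scale by simp
  have c: "integral (el J j) (G2 J Xn c (\<lambda>i. a *\<^sub>R e i) j) = a * integral (el J j) (G2 J Xn c e j)" for j
    unfolding G2_scale by simp
  show ?thesis
    unfolding Phi_def a b c unfolding ev_scale Gm_scale
    by (simp add: sum_distrib_left algebra_simps)
qed

lemma lin_aux: "p \<le> \<theta> * A + B \<Longrightarrow> (1 - \<theta>) * A \<le> A + B - p" for p \<theta> A B :: real
  by (simp add: algebra_simps)

lemma lin_aux2: "(1 / real J) / 2 * (k * (w * u) + k * (w * v)) = k * w * (u + v) / (2 * real J)"
  for k w u v :: real by (simp add: field_simps)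

lemma lin_aux3: "0 \<le> Q \<Longrightarrow> J > 0 \<Longrightarrow> Q / (6 * real J) \<le> Q / (2 * real J)"
  by (simp add: divide_left_mono)

lemma affc_at_left' [simp]: "affc J c j (node J (j - Suc 0)) = c (j - Suc 0)"
  using affc_at_left[of J c j] by simp

definition Pel where
  "Pel lump J Xn dt c e j =
     (if lump then (1 / real J) / 2 * (Gm J Xn dt c e j (node J j) + Gm J Xn dt c e j (node J (j - 1)))
      else integral (el J j) (Gm J Xn dt c e j))
     + integral (el J j) (G1 J Xn c e j) + integral (el J j) (G2 J Xn c e j)"

definition Bd where
  "Bd J Xn P1 P2 rh c e = (\<Sum>p\<in>P1. rh p * (ev J Xn p \<bullet> e1) * (ev J e p \<bullet> e2))
    + (\<Sum>p\<in>P2. ((posp (rh p) *\<^sub>R (ev J Xn p + ev J c p) + negp (rh p) *\<^sub>R ev J Xn p) \<bullet> e1) * (ev J e p \<bullet> e1))"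

lemma Phi_decomp: "Phi lump J Xn dt P1 P2 rh c e = (\<Sum>j=1..J. Pel lump J Xn dt c e j) + Bd J Xn P1 P2 rh c e"
  unfolding Phi_def Pel_def Bd_def
  by (cases lump) (simp_all add: sum.distrib sum_distrib_left algebra_simps)

lemma affc_uu2: "affc J c j t = c (j - 1) + uu J j t *\<^sub>R (c j - c (j - 1))"
  unfolding affc_def uu_def ..

lemma int_sq:
  assumes J: "J > 0" and j: "j \<ge> 1"
  shows "integral (el J j) (\<lambda>t. (norm (affc J D j t))\<^sup>2)
     = (1 / real J) * (((norm (D (j - 1)))\<^sup>2 + D (j - 1) \<bullet> D j + (norm (D j))\<^sup>2) / 3)"
proof -
  define a where "a = D (j - 1)"
  define b where "b = D j"
  have eq: "(\<lambda>t. (norm (affc J D j t))\<^sup>2) = (\<lambda>t. a \<bullet> a + uu J j t * (2 * (a \<bullet> (b - a))) + (uu J j t)\<^sup>2 * ((b - a) \<bullet> (b - a)))"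
    unfolding affc_uu2 a_def[symmetric] b_def[symmetric] power2_norm_eq_inner
    by (rule ext) (simp add: inner_add_left inner_add_right power2_eq_square algebra_simps inner_commute)
  have "integral (el J j) (\<lambda>t. (norm (affc J D j t))\<^sup>2) = (1 / real J) * (a \<bullet> a + (2 * (a \<bullet> (b - a))) / 2 + ((b - a) \<bullet> (b - a)) / 3)"
    unfolding eq by (rule integral_unique[OF poly_integral[OF J j]])
  also have "\<dots> = (1 / real J) * (((norm a)\<^sup>2 + a \<bullet> b + (norm b)\<^sup>2) / 3)"
    by (simp add: power2_norm_eq_inner inner_diff_left inner_diff_right inner_commute field_simps)
  finally show ?thesis by (simp add: a_def b_def)
qed

lemma int_lin:
  assumes J: "J > 0" and j: "j \<ge> 1"
  shows "integral (el J j) (\<lambda>t. (1 - uu J j t) * \<alpha> + uu J j t * \<beta>) = (1 / real J) * ((\<alpha> + \<beta>) / 2)"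
proof -
  have eq: "(\<lambda>t. (1 - uu J j t) * \<alpha> + uu J j t * \<beta>) = (\<lambda>t. \<alpha> + uu J j t * (\<beta> - \<alpha>) + (uu J j t)\<^sup>2 * 0)"
    by (rule ext) (simp add: algebra_simps)
  show ?thesis unfolding eq using integral_unique[OF poly_integral[OF J j, of \<alpha> "\<beta> - \<alpha>" 0]]
    by (simp add: field_simps)
qed

lemma affc_e1_uu: "affc J c j t \<bullet> e1 = (1 - uu J j t) * (c (j - 1) \<bullet> e1) + uu J j t * (c j \<bullet> e1)"
  unfolding affc_uu by (simp add: inner_add_left)

lemma abs_e1: "\<bar>v \<bullet> e1\<bar> \<le> norm v"
proof -
  have "\<bar>v \<bullet> e1\<bar> \<le> norm v * norm e1" by (rule Cauchy_Schwarz_ineq2)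
  then show ?thesis by (simp add: e1_def)
qed

lemma Pel_mono:
  fixes c c' :: "nat \<Rightarrow> real \<times> real"
  assumes J: "J > 0" and j: "j \<in> {1..J}" and m: "m > 0" and dt: "dt > 0" and dt4: "dt < 4 * m\<^sup>2"
    and hm: "\<And>t. t \<in> el J j \<Longrightarrow> m \<le> affc J Xn j t \<bullet> e1"
    and L: "norm (slc J Xn j) > 0"
  defines "D \<equiv> (\<lambda>i. c i - c' i)"
  shows "Pel lump J Xn dt c D j - Pel lump J Xn dt c' D j
     \<ge> (1 - sqrt dt / (2 * m)) * (m * norm (slc J Xn j) / dt) / (6 * real J) * ((norm (D (j - 1)))\<^sup>2 + (norm (D j))\<^sup>2)"
proof -
  define L where "L = norm (slc J Xn j)"
  define \<theta> where "\<theta> = sqrt dt / (2 * m)"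
  define s where "s = norm (slc J D j)"
  define a where "a = D (j - 1)"
  define b where "b = D j"
  have j1: "j \<ge> 1" using j by auto
  have Lp: "L > 0" using L by (simp add: L_def)
  have th1: "\<theta> < 1"
  proof -
    have "sqrt dt < sqrt (4 * m\<^sup>2)" using dt4 by simp
    also have "\<dots> = 2 * m" using m by (simp add: real_sqrt_mult)
    finally show ?thesis using m by (simp add: \<theta>_def)
  qed
  have thn: "\<theta> \<ge> 0" using m dt by (simp add: \<theta>_def)
  have sn: "s \<ge> 0" by (simp add: s_def)
  have dGm: "Gm J Xn dt c D j t - Gm J Xn dt c' D j t = (affc J Xn j t \<bullet> e1) * L / dt * (norm (affc J D j t))\<^sup>2" for t
    unfolding Gm_def D_def affc_diff L_def
    by (simp add: power2_norm_eq_inner inner_diff_left inner_diff_right algebra_simps)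
  have slD: "slc J (\<lambda>i. Xn i + c i) j - slc J (\<lambda>i. Xn i + c' i) j = slc J D j"
    unfolding slc_def D_def by (simp add: algebra_simps)
  define \<delta> where "\<delta> = norm (slc J (\<lambda>i. Xn i + c i) j) - norm (slc J (\<lambda>i. Xn i + c' i) j)"
  have \<delta>s: "\<bar>\<delta>\<bar> \<le> s" unfolding \<delta>_def s_def slD[symmetric] by (rule norm_triangle_ineq3)
  have dG1: "G1 J Xn c D j t - G1 J Xn c' D j t = (affc J D j t \<bullet> e1) * \<delta>" for t
    unfolding G1_def \<delta>_def by (simp add: algebra_simps)
  have dG2: "G2 J Xn c D j t - G2 J Xn c' D j t = (affc J Xn j t \<bullet> e1) / L * s\<^sup>2" for t
  proof -
    have "G2 J Xn c D j t - G2 J Xn c' D j t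
        = ((affc J Xn j t \<bullet> e1) *\<^sub>R (slc J (\<lambda>i. Xn i + c i) j - slc J (\<lambda>i. Xn i + c' i) j)) \<bullet> (inverse L *\<^sub>R slc J D j)"
      unfolding G2_def L_def by (simp add: inner_diff_left scaleR_diff_right right_diff_distrib)
    also have "\<dots> = (affc J Xn j t \<bullet> e1) / L * s\<^sup>2"
      unfolding slD s_def by (simp add: power2_norm_eq_inner field_simps)
    finally show ?thesis .
  qed
  have cross: "(affc J D j t \<bullet> e1) * \<delta> \<ge> - (norm (affc J D j t) * s)" for t
  proof -
    have "\<bar>(affc J D j t \<bullet> e1) * \<delta>\<bar> \<le> norm (affc J D j t) * s"
      unfolding abs_mult by (intro mult_mono abs_e1 \<delta>s) auto
    then show ?thesis by linarith
  qed
  have cI: "continuous_on (el J j) (\<lambda>t. f t - g t)" if "continuous_on (el J j) f" "continuous_on (el J j) g" for f g :: "real \<Rightarrow> real"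
    using that by (intro continuous_intros)
  have idiff: "integral (el J j) f - integral (el J j) g = integral (el J j) (\<lambda>t. f t - g t)"
    if "continuous_on (el J j) f" "continuous_on (el J j) g" for f g :: "real \<Rightarrow> real"
    by (rule integral_diff[symmetric]) (use el_integrable that in auto)
  have contn: "continuous_on (el J j) (\<lambda>t. norm (affc J D j t))" by (intro continuous_intros affc_cont)
  have contx: "continuous_on (el J j) (\<lambda>t. affc J Xn j t \<bullet> e1)" by (intro continuous_intros affc_cont)
  have I1: "integral (el J j) (G1 J Xn c D j) - integral (el J j) (G1 J Xn c' D j) \<ge> - s * ((1 / real J) * ((norm a + norm b) / 2))"
  proof -
    have "integral (el J j) (G1 J Xn c D j) - integral (el J j) (G1 J Xn c' D j) = integral (el J j) (\<lambda>t. (affc J D j t \<bullet> e1) * \<delta>)"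
      using idiff[OF G1_cont G1_cont] dG1 by simp
    also have "\<dots> \<ge> integral (el J j) (\<lambda>t. - s * ((1 - uu J j t) * norm a + uu J j t * norm b))"
    proof (rule integral_le)
      show "(\<lambda>t. - s * ((1 - uu J j t) * norm a + uu J j t * norm b)) integrable_on el J j"
        by (intro el_integrable) (unfold uu_def, intro continuous_intros)
      show "(\<lambda>t. (affc J D j t \<bullet> e1) * \<delta>) integrable_on el J j"
        by (intro el_integrable) (intro continuous_intros affc_cont)
      fix t assume t: "t \<in> el J j"
      have "norm (affc J D j t) \<le> (1 - uu J j t) * norm a + uu J j t * norm b"
        using affc_norm_le[OF J j1 t] by (simp add: a_def b_def)
      then have "norm (affc J D j t) * s \<le> ((1 - uu J j t) * norm a + uu J j t * norm b) * s"
        using sn by (rule mult_right_mono)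
      then show "- s * ((1 - uu J j t) * norm a + uu J j t * norm b) \<le> (affc J D j t \<bullet> e1) * \<delta>"
        using cross[of t] by (simp add: algebra_simps)
    qed
    also have "integral (el J j) (\<lambda>t. - s * ((1 - uu J j t) * norm a + uu J j t * norm b)) = - s * ((1 / real J) * ((norm a + norm b) / 2))"
      using int_lin[OF J j1, of "norm a" "norm b"] by simp
    finally show ?thesis by linarith
  qed
  have I2: "integral (el J j) (G2 J Xn c D j) - integral (el J j) (G2 J Xn c' D j)
      = s\<^sup>2 / L * ((1 / real J) * ((affc J Xn j (node J (j - 1)) \<bullet> e1 + affc J Xn j (node J j) \<bullet> e1) / 2))"
  proof -
    have "integral (el J j) (G2 J Xn c D j) - integral (el J j) (G2 J Xn c' D j) = integral (el J j) (\<lambda>t. s\<^sup>2 / L * ((1 - uu J j t) * (Xn (j - 1) \<bullet> e1) + uu J j t * (Xn j \<bullet> e1)))"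
    proof -
      have e: "G2 J Xn c D j t - G2 J Xn c' D j t = s\<^sup>2 / L * ((1 - uu J j t) * (Xn (j - 1) \<bullet> e1) + uu J j t * (Xn j \<bullet> e1))" for t
        unfolding dG2 affc_e1_uu[symmetric] by simp
      show ?thesis by (simp only: idiff[OF G2_cont G2_cont] e)
    qed
    also have "\<dots> = s\<^sup>2 / L * ((1 / real J) * ((Xn (j - 1) \<bullet> e1 + Xn j \<bullet> e1) / 2))"
      using int_lin[OF J j1, of "Xn (j - 1) \<bullet> e1" "Xn j \<bullet> e1"] by simp
    finally show ?thesis using affc_at_right[OF J j1, of Xn] affc_at_left[of J Xn j] by simp
  qed
  define xa where "xa = affc J Xn j (node J (j - 1)) \<bullet> e1"
  define xb where "xb = affc J Xn j (node J j) \<bullet> e1"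
  have ela: "node J (j - 1) \<in> el J j" and elb: "node J j \<in> el J j"
    using node_le[OF J j1] by (auto simp: el_def)
  have xa: "m \<le> xa" using hm[OF ela] by (simp add: xa_def)
  have xb: "m \<le> xb" using hm[OF elb] by (simp add: xb_def)
  have ama: "norm a * s \<le> \<theta> * (xa * L / dt * (norm a)\<^sup>2) + xa / L * s\<^sup>2"
    unfolding \<theta>_def using amgm_core[OF m xa Lp dt dt4 _ sn] by simp
  have amb: "norm b * s \<le> \<theta> * (xb * L / dt * (norm b)\<^sup>2) + xb / L * s\<^sup>2"
    unfolding \<theta>_def using amgm_core[OF m xb Lp dt dt4 _ sn] by simp
  define \<kappa> where "\<kappa> = (1 - \<theta>) * (m * L / dt) / (6 * real J)"
  have goal: "Pel lump J Xn dt c D j - Pel lump J Xn dt c' D j \<ge> \<kappa> * ((norm a)\<^sup>2 + (norm b)\<^sup>2)"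
  proof (cases lump)
    case True
    have "Pel lump J Xn dt c D j - Pel lump J Xn dt c' D j
        = (1 / real J) / 2 * (xb * L / dt * (norm b)\<^sup>2 + xa * L / dt * (norm a)\<^sup>2)
          + (integral (el J j) (G1 J Xn c D j) - integral (el J j) (G1 J Xn c' D j))
          + (integral (el J j) (G2 J Xn c D j) - integral (el J j) (G2 J Xn c' D j))"
      using True dGm[of "node J j"] dGm[of "node J (j - 1)"] affc_at_right[OF J j1, of D]
      by (simp add: Pel_def xa_def xb_def a_def b_def algebra_simps)
    also have "\<dots> \<ge> (1 / real J) / 2 * (xb * L / dt * (norm b)\<^sup>2 + xa * L / dt * (norm a)\<^sup>2)
          - s * ((1 / real J) * ((norm a + norm b) / 2)) + s\<^sup>2 / L * ((1 / real J) * ((xa + xb) / 2))"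
      using I1 I2 by (simp add: xa_def xb_def)
    also have "(1 / real J) / 2 * (xb * L / dt * (norm b)\<^sup>2 + xa * L / dt * (norm a)\<^sup>2)
          - s * ((1 / real J) * ((norm a + norm b) / 2)) + s\<^sup>2 / L * ((1 / real J) * ((xa + xb) / 2))
        = (1 / real J) / 2 * ((xa * L / dt * (norm a)\<^sup>2 + xa / L * s\<^sup>2 - norm a * s)
                             + (xb * L / dt * (norm b)\<^sup>2 + xb / L * s\<^sup>2 - norm b * s))"
      by (simp add: algebra_simps add_divide_distrib)
    also have "\<dots> \<ge> (1 / real J) / 2 * ((1 - \<theta>) * (xa * L / dt * (norm a)\<^sup>2) + (1 - \<theta>) * (xb * L / dt * (norm b)\<^sup>2))"
      using lin_aux[OF ama] lin_aux[OF amb] J by (intro mult_left_mono add_mono) auto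
    also have "(1 / real J) / 2 * ((1 - \<theta>) * (xa * L / dt * (norm a)\<^sup>2) + (1 - \<theta>) * (xb * L / dt * (norm b)\<^sup>2))
        \<ge> (1 / real J) / 2 * ((1 - \<theta>) * (m * L / dt * (norm a)\<^sup>2) + (1 - \<theta>) * (m * L / dt * (norm b)\<^sup>2))"
    proof -
      have "m * L / dt * (norm a)\<^sup>2 \<le> xa * L / dt * (norm a)\<^sup>2" "m * L / dt * (norm b)\<^sup>2 \<le> xb * L / dt * (norm b)\<^sup>2"
        using xa xb Lp dt by (auto intro!: mult_right_mono divide_right_mono)
      then show ?thesis using th1 J by (intro mult_left_mono add_mono) auto
    qed
    also have "(1 / real J) / 2 * ((1 - \<theta>) * (m * L / dt * (norm a)\<^sup>2) + (1 - \<theta>) * (m * L / dt * (norm b)\<^sup>2))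
        \<ge> \<kappa> * ((norm a)\<^sup>2 + (norm b)\<^sup>2)"
    proof -
      have Q: "0 \<le> (1 - \<theta>) * (m * L / dt) * ((norm a)\<^sup>2 + (norm b)\<^sup>2)"
        using th1 m Lp dt by (intro mult_nonneg_nonneg) auto
      show ?thesis unfolding lin_aux2 \<kappa>_def using lin_aux3[OF Q J] by simp
    qed
    finally show ?thesis by linarith
  next
    case False
    have "Pel lump J Xn dt c D j - Pel lump J Xn dt c' D j
        = integral (el J j) (\<lambda>t. (Gm J Xn dt c D j t - Gm J Xn dt c' D j t) + (G1 J Xn c D j t - G1 J Xn c' D j t)
              + (G2 J Xn c D j t - G2 J Xn c' D j t))"
    proof -
      have "integral (el J j) (\<lambda>t. (Gm J Xn dt c D j t - Gm J Xn dt c' D j t) + (G1 J Xn c D j t - G1 J Xn c' D j t)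
              + (G2 J Xn c D j t - G2 J Xn c' D j t))
          = integral (el J j) (\<lambda>t. (Gm J Xn dt c D j t - Gm J Xn dt c' D j t) + (G1 J Xn c D j t - G1 J Xn c' D j t))
            + integral (el J j) (\<lambda>t. G2 J Xn c D j t - G2 J Xn c' D j t)"
        by (intro int_add_el continuous_intros Gm_cont G1_cont G2_cont)
      also have "\<dots> = integral (el J j) (\<lambda>t. Gm J Xn dt c D j t - Gm J Xn dt c' D j t)
            + integral (el J j) (\<lambda>t. G1 J Xn c D j t - G1 J Xn c' D j t)
            + integral (el J j) (\<lambda>t. G2 J Xn c D j t - G2 J Xn c' D j t)"
        by (subst int_add_el) (rule refl | intro continuous_intros Gm_cont G1_cont G2_cont)+
      moreover have i1: "integral (el J j) (Gm J Xn dt c D j) - integral (el J j) (Gm J Xn dt c' D j)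
          = integral (el J j) (\<lambda>t. Gm J Xn dt c D j t - Gm J Xn dt c' D j t)"
        by (rule idiff) (rule Gm_cont)+
      moreover have i2: "integral (el J j) (G1 J Xn c D j) - integral (el J j) (G1 J Xn c' D j)
          = integral (el J j) (\<lambda>t. G1 J Xn c D j t - G1 J Xn c' D j t)"
        by (rule idiff) (rule G1_cont)+
      moreover have i3: "integral (el J j) (G2 J Xn c D j) - integral (el J j) (G2 J Xn c' D j)
          = integral (el J j) (\<lambda>t. G2 J Xn c D j t - G2 J Xn c' D j t)"
        by (rule idiff) (rule G2_cont)+
      ultimately show ?thesis
        using False unfolding Pel_def by simp
    qed
    also have "\<dots> \<ge> integral (el J j) (\<lambda>t. (1 - \<theta>) * (m * L / dt) * (norm (affc J D j t))\<^sup>2)"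
    proof (rule integral_le)
      show "(\<lambda>t. (1 - \<theta>) * (m * L / dt) * (norm (affc J D j t))\<^sup>2) integrable_on el J j"
        by (intro el_integrable continuous_intros affc_cont)
      show "(\<lambda>t. (Gm J Xn dt c D j t - Gm J Xn dt c' D j t) + (G1 J Xn c D j t - G1 J Xn c' D j t)
              + (G2 J Xn c D j t - G2 J Xn c' D j t)) integrable_on el J j"
        by (intro el_integrable continuous_intros Gm_cont G1_cont G2_cont)
      fix t assume t: "t \<in> el J j"
      define x where "x = affc J Xn j t \<bullet> e1"
      define \<alpha> where "\<alpha> = norm (affc J D j t)"
      have x: "m \<le> x" using hm[OF t] by (simp add: x_def)
      have an: "\<alpha> \<ge> 0" by (simp add: \<alpha>_def)
      have am: "\<alpha> * s \<le> \<theta> * (x * L / dt * \<alpha>\<^sup>2) + x / L * s\<^sup>2"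
        unfolding \<theta>_def using amgm_core[OF m x Lp dt dt4 an sn] .
      have mx0: "m * L / dt * \<alpha>\<^sup>2 \<le> x * L / dt * \<alpha>\<^sup>2"
        using x Lp dt by (auto intro!: mult_right_mono divide_right_mono)
      have mx: "(1 - \<theta>) * (m * L / dt) * \<alpha>\<^sup>2 \<le> (1 - \<theta>) * (x * L / dt * \<alpha>\<^sup>2)"
        using mult_left_mono[OF mx0, of "1 - \<theta>"] th1 by (simp add: mult.assoc)
      show "(1 - \<theta>) * (m * L / dt) * (norm (affc J D j t))\<^sup>2 \<le> (Gm J Xn dt c D j t - Gm J Xn dt c' D j t) + (G1 J Xn c D j t - G1 J Xn c' D j t)
              + (G2 J Xn c D j t - G2 J Xn c' D j t)"
        unfolding dGm dG1 dG2 x_def[symmetric] \<alpha>_def[symmetric]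
        using cross[of t] lin_aux[OF am] mx unfolding \<alpha>_def[symmetric] by linarith
    qed
    also have "integral (el J j) (\<lambda>t. (1 - \<theta>) * (m * L / dt) * (norm (affc J D j t))\<^sup>2)
        = (1 - \<theta>) * (m * L / dt) * ((1 / real J) * (((norm a)\<^sup>2 + a \<bullet> b + (norm b)\<^sup>2) / 3))"
      using int_sq[OF J j1, of D] by (simp add: a_def b_def)
    also have "\<dots> \<ge> \<kappa> * ((norm a)\<^sup>2 + (norm b)\<^sup>2)"
    proof -
      have ab: "(norm a)\<^sup>2 + (norm b)\<^sup>2 \<le> 2 * ((norm a)\<^sup>2 + a \<bullet> b + (norm b)\<^sup>2)"
      proof -
        have "0 \<le> (norm (a + b))\<^sup>2" by simp
        then show ?thesis by (simp add: power2_norm_eq_inner inner_add_left inner_add_right inner_commute)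
      qed
      have c0: "0 \<le> (1 - \<theta>) * (m * L / dt) / real J" using th1 m Lp dt J by auto
      have "\<kappa> * ((norm a)\<^sup>2 + (norm b)\<^sup>2) = ((1 - \<theta>) * (m * L / dt) / real J) * (((norm a)\<^sup>2 + (norm b)\<^sup>2) / 6)"
        by (simp add: \<kappa>_def field_simps)
      also have "\<dots> \<le> ((1 - \<theta>) * (m * L / dt) / real J) * (((norm a)\<^sup>2 + a \<bullet> b + (norm b)\<^sup>2) / 3)"
        using ab by (intro mult_left_mono c0) auto
      also have "\<dots> = (1 - \<theta>) * (m * L / dt) * ((1 / real J) * (((norm a)\<^sup>2 + a \<bullet> b + (norm b)\<^sup>2) / 3))"
        by simp
      finally show ?thesis by linarith
    qed
    finally show ?thesis by linarith
  qed
  then show ?thesis unfolding \<kappa>_def \<theta>_def L_def a_def b_def by simp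
qed

lemma Gm_diff_c: "Gm J Xn dt c e j t - Gm J Xn dt c' e j t = Gm J Xn dt (\<lambda>i. c i - c' i) e j t"
  unfolding Gm_def affc_diff by (simp add: inner_diff_left scaleR_diff_right algebra_simps)

lemma abs_inner_le: "\<bar>u \<bullet> v\<bar> \<le> norm u * norm v" for u v :: "real \<times> real"
  by (rule Cauchy_Schwarz_ineq2)

lemma lump_bound:
  assumes J: "J > 0" and j: "j \<ge> 1" and B: "\<And>t. t \<in> el J j \<Longrightarrow> \<bar>g t\<bar> \<le> B"
  shows "\<bar>(1 / real J) / 2 * (g (node J j) + g (node J (j - 1)))\<bar> \<le> (1 / real J) * B"
proof -
  have ela: "node J (j - 1) \<in> el J j" and elb: "node J j \<in> el J j"
    using node_le[OF J j] by (auto simp: el_def)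
  have "\<bar>g (node J j) + g (node J (j - 1))\<bar> \<le> 2 * B" using B[OF ela] B[OF elb] by linarith
  then have "(1 / real J) / 2 * \<bar>g (node J j) + g (node J (j - 1))\<bar> \<le> (1 / real J) / 2 * (2 * B)"
    using J by (intro mult_left_mono) auto
  then show ?thesis using J by (simp add: abs_mult)
qed

lemma Pel_lip:
  fixes c c' v :: "nat \<Rightarrow> real \<times> real"
  assumes J: "J > 0" and j: "j \<in> {1..J}" and dt: "dt > 0"
    and Mx: "\<And>t. t \<in> el J j \<Longrightarrow> \<bar>affc J Xn j t \<bullet> e1\<bar> \<le> Mx"
    and Lx: "norm (slc J Xn j) \<le> Lx" and Lm: "Lm > 0" "Lm \<le> norm (slc J Xn j)"
  defines "D \<equiv> (\<lambda>i. c i - c' i)"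
  shows "\<bar>Pel lump J Xn dt c v j - Pel lump J Xn dt c' v j\<bar>
     \<le> (1 / real J) * (Mx * Lx / dt + real J + Mx * (real J)\<^sup>2 / Lm)
        * ((norm (D (j - 1)) + norm (D j)) * (norm (v (j - 1)) + norm (v j)))"
proof -
  have j1: "j \<ge> 1" using j by auto
  define na where "na = norm (D (j - 1)) + norm (D j)"
  define nv where "nv = norm (v (j - 1)) + norm (v j)"
  define L where "L = norm (slc J Xn j)"
  have Lp: "L > 0" using Lm unfolding L_def by linarith
  have Mx0: "Mx \<ge> 0" using Mx[of "node J j"] node_le[OF J j1] by (auto simp: el_def)
  have Lx0: "Lx \<ge> 0" using Lx norm_ge_zero[of "slc J Xn j"] by linarith
  have na0: "na \<ge> 0" and nv0: "nv \<ge> 0" by (auto simp: na_def nv_def)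
  have aD: "norm (affc J D j t) \<le> na" if "t \<in> el J j" for t using affc_norm_le2[OF J j1 that] by (simp add: na_def)
  have av: "norm (affc J v j t) \<le> nv" if "t \<in> el J j" for t using affc_norm_le2[OF J j1 that] by (simp add: nv_def)
  have sD: "norm (slc J D j) \<le> real J * na"
    unfolding slc_def na_def using norm_triangle_ineq4[of "D j" "D (j - 1)"] by (simp add: mult_left_mono add.commute)
  have sv: "norm (slc J v j) \<le> real J * nv"
    unfolding slc_def nv_def using norm_triangle_ineq4[of "v j" "v (j - 1)"] by (simp add: mult_left_mono add.commute)
  have bGm: "\<bar>Gm J Xn dt c v j t - Gm J Xn dt c' v j t\<bar> \<le> Mx * Lx / dt * (na * nv)" if t: "t \<in> el J j" for t
  proof -
    have "Gm J Xn dt c v j t - Gm J Xn dt c' v j t = (affc J Xn j t \<bullet> e1) * L / dt * (affc J D j t \<bullet> affc J v j t)"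
      unfolding Gm_diff_c D_def[symmetric] unfolding Gm_def L_def by (simp add: algebra_simps)
    also have "\<bar>\<dots>\<bar> = \<bar>affc J Xn j t \<bullet> e1\<bar> * L / dt * \<bar>affc J D j t \<bullet> affc J v j t\<bar>"
      using Lp dt by (simp add: abs_mult)
    also have "\<dots> \<le> Mx * Lx / dt * (na * nv)"
    proof (intro mult_mono divide_right_mono)
      show "\<bar>affc J Xn j t \<bullet> e1\<bar> \<le> Mx" by (rule Mx[OF t])
      show "L \<le> Lx" using Lx by (simp add: L_def)
      show "\<bar>affc J D j t \<bullet> affc J v j t\<bar> \<le> na * nv"
        using abs_inner_le[of "affc J D j t" "affc J v j t"] mult_mono[OF aD[OF t] av[OF t]] na0 by simp
    qed (use Mx0 Lp dt na0 nv0 Lx0 in \<open>auto intro!: divide_nonneg_pos mult_nonneg_nonneg\<close>)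
    finally show ?thesis .
  qed
  have bG1: "\<bar>G1 J Xn c v j t - G1 J Xn c' v j t\<bar> \<le> real J * (na * nv)" if t: "t \<in> el J j" for t
  proof -
    have slD: "slc J (\<lambda>i. Xn i + c i) j - slc J (\<lambda>i. Xn i + c' i) j = slc J D j"
      unfolding slc_def D_def by (simp add: algebra_simps)
    have "G1 J Xn c v j t - G1 J Xn c' v j t = (affc J v j t \<bullet> e1) * (norm (slc J (\<lambda>i. Xn i + c i) j) - norm (slc J (\<lambda>i. Xn i + c' i) j))"
      unfolding G1_def by (simp add: algebra_simps)
    also have "\<bar>\<dots>\<bar> \<le> nv * (real J * na)"
      unfolding abs_mult
    proof (intro mult_mono)
      show "\<bar>affc J v j t \<bullet> e1\<bar> \<le> nv" using abs_e1 av[OF t] by (rule order_trans)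
      show "\<bar>norm (slc J (\<lambda>i. Xn i + c i) j) - norm (slc J (\<lambda>i. Xn i + c' i) j)\<bar> \<le> real J * na"
        using norm_triangle_ineq3 sD unfolding slD[symmetric] by (rule order_trans)
    qed (use nv0 in auto)
    finally show ?thesis by (simp add: algebra_simps)
  qed
  have bG2: "\<bar>G2 J Xn c v j t - G2 J Xn c' v j t\<bar> \<le> Mx * (real J)\<^sup>2 / Lm * (na * nv)" if t: "t \<in> el J j" for t
  proof -
    have slD: "slc J (\<lambda>i. Xn i + c i) j - slc J (\<lambda>i. Xn i + c' i) j = slc J D j"
      unfolding slc_def D_def by (simp add: algebra_simps)
    have "G2 J Xn c v j t - G2 J Xn c' v j t = (affc J Xn j t \<bullet> e1) / L * ((slc J (\<lambda>i. Xn i + c i) j - slc J (\<lambda>i. Xn i + c' i) j) \<bullet> slc J v j)"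
      unfolding G2_def L_def by (simp add: inner_diff_left algebra_simps divide_inverse)
    also have "\<dots> = (affc J Xn j t \<bullet> e1) / L * (slc J D j \<bullet> slc J v j)" unfolding slD ..
    also have "\<bar>\<dots>\<bar> = \<bar>affc J Xn j t \<bullet> e1\<bar> / L * \<bar>slc J D j \<bullet> slc J v j\<bar>"
      using Lp by (simp add: abs_mult)
    also have "\<dots> \<le> Mx / Lm * ((real J * na) * (real J * nv))"
    proof (intro mult_mono frac_le)
      show "\<bar>affc J Xn j t \<bullet> e1\<bar> \<le> Mx" by (rule Mx[OF t])
      show "Lm \<le> L" using Lm by (simp add: L_def)
      show "\<bar>slc J D j \<bullet> slc J v j\<bar> \<le> real J * na * (real J * nv)"
        using abs_inner_le[of "slc J D j" "slc J v j"] mult_mono[OF sD sv] na0 J by simp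
    qed (use Mx0 Lm na0 nv0 in auto)
    finally show ?thesis by (simp add: power2_eq_square algebra_simps)
  qed
  have cI: "continuous_on (el J j) (\<lambda>t. f t - g t)" if "continuous_on (el J j) f" "continuous_on (el J j) g" for f g :: "real \<Rightarrow> real"
    using that by (intro continuous_intros)
  have idiff: "integral (el J j) f - integral (el J j) g = integral (el J j) (\<lambda>t. f t - g t)"
    if "continuous_on (el J j) f" "continuous_on (el J j) g" for f g :: "real \<Rightarrow> real"
    by (rule integral_diff[symmetric]) (use el_integrable that in auto)
  have t1: "\<bar>(if lump then (1 / real J) / 2 * (Gm J Xn dt c v j (node J j) + Gm J Xn dt c v j (node J (j - 1)))
      else integral (el J j) (Gm J Xn dt c v j))
      - (if lump then (1 / real J) / 2 * (Gm J Xn dt c' v j (node J j) + Gm J Xn dt c' v j (node J (j - 1)))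
      else integral (el J j) (Gm J Xn dt c' v j))\<bar> \<le> (1 / real J) * (Mx * Lx / dt * (na * nv))"
  proof (cases lump)
    case True
    have "\<bar>(1 / real J) / 2 * ((\<lambda>t. Gm J Xn dt c v j t - Gm J Xn dt c' v j t) (node J j)
        + (\<lambda>t. Gm J Xn dt c v j t - Gm J Xn dt c' v j t) (node J (j - 1)))\<bar> \<le> (1 / real J) * (Mx * Lx / dt * (na * nv))"
      by (rule lump_bound[OF J j1]) (rule bGm)
    then show ?thesis using True by (simp add: algebra_simps)
  next
    case False
    have i1: "integral (el J j) (Gm J Xn dt c v j) - integral (el J j) (Gm J Xn dt c' v j)
          = integral (el J j) (\<lambda>t. Gm J Xn dt c v j t - Gm J Xn dt c' v j t)"
      by (rule idiff) (rule Gm_cont)+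
    have "\<bar>integral (el J j) (\<lambda>t. Gm J Xn dt c v j t - Gm J Xn dt c' v j t)\<bar> \<le> (1 / real J) * (Mx * Lx / dt * (na * nv))"
      by (rule integral_bound_el[OF J j1]) (intro continuous_intros Gm_cont, rule bGm)
    then show ?thesis using False i1 by simp
  qed
  have t2: "\<bar>integral (el J j) (G1 J Xn c v j) - integral (el J j) (G1 J Xn c' v j)\<bar> \<le> (1 / real J) * (real J * (na * nv))"
  proof -
    have i1: "integral (el J j) (G1 J Xn c v j) - integral (el J j) (G1 J Xn c' v j)
          = integral (el J j) (\<lambda>t. G1 J Xn c v j t - G1 J Xn c' v j t)"
      by (rule idiff) (rule G1_cont)+
    show ?thesis unfolding i1
      by (rule integral_bound_el[OF J j1]) (intro continuous_intros G1_cont, rule bG1)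
  qed
  have t3: "\<bar>integral (el J j) (G2 J Xn c v j) - integral (el J j) (G2 J Xn c' v j)\<bar> \<le> (1 / real J) * (Mx * (real J)\<^sup>2 / Lm * (na * nv))"
  proof -
    have i1: "integral (el J j) (G2 J Xn c v j) - integral (el J j) (G2 J Xn c' v j)
          = integral (el J j) (\<lambda>t. G2 J Xn c v j t - G2 J Xn c' v j t)"
      by (rule idiff) (rule G2_cont)+
    show ?thesis unfolding i1
      by (rule integral_bound_el[OF J j1]) (intro continuous_intros G2_cont, rule bG2)
  qed
  have "\<bar>Pel lump J Xn dt c v j - Pel lump J Xn dt c' v j\<bar>
      \<le> (1 / real J) * (Mx * Lx / dt * (na * nv)) + (1 / real J) * (real J * (na * nv)) + (1 / real J) * (Mx * (real J)\<^sup>2 / Lm * (na * nv))"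
    using t1 t2 t3 unfolding Pel_def by linarith
  also have "\<dots> = (1 / real J) * (Mx * Lx / dt + real J + Mx * (real J)\<^sup>2 / Lm) * (na * nv)"
    by (simp add: algebra_simps)
  finally show ?thesis by (simp add: na_def nv_def)
qed

lemma sum_adj_sq:
  fixes f :: "nat \<Rightarrow> real"
  assumes "\<And>i. f i \<ge> 0" "J > 0"
  shows "(\<Sum>i\<le>J. f i) \<le> (\<Sum>j=1..J. f (j - 1) + f j)"
proof -
  have a: "(\<Sum>i\<le>J. f i) = f 0 + (\<Sum>j=1..J. f j)"
    by (simp add: atMost_atLeast0 sum.atLeast_Suc_atMost)
  have b: "f 0 \<le> (\<Sum>j=1..J. f (j - 1))"
  proof -
    have "f 0 = f (1 - 1)" by simp
    also have "\<dots> \<le> (\<Sum>j=1..J. f (j - 1))" using assms by (intro member_le_sum) auto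
    finally show ?thesis .
  qed
  show ?thesis unfolding a sum.distrib using b by simp
qed

lemma sum_adj_le:
  fixes f :: "nat \<Rightarrow> real"
  assumes "\<And>i. f i \<ge> 0"
  shows "(\<Sum>j=1..J. f (j - 1) + f j) \<le> 2 * (\<Sum>i\<le>J. f i)"
proof -
  have a: "(\<Sum>j=1..J. f (j - 1)) \<le> (\<Sum>i\<le>J. f i)"
  proof -
    have "(\<Sum>j=1..J. f (j - 1)) = (\<Sum>i\<in>(\<lambda>j. j - 1) ` {1..J}. f i)"
      by (subst sum.reindex) (auto simp: inj_on_def)
    also have "\<dots> \<le> (\<Sum>i\<le>J. f i)" using assms by (intro sum_mono2) auto
    finally show ?thesis .
  qed
  have b: "(\<Sum>j=1..J. f j) \<le> (\<Sum>i\<le>J. f i)" using assms by (intro sum_mono2) auto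
  show ?thesis unfolding sum.distrib using a b by simp
qed

lemma sum_prod_le:
  fixes a b :: "nat \<Rightarrow> real"
  assumes "\<And>i. a i \<ge> 0" "\<And>i. b i \<ge> 0" "finite A"
  shows "(\<Sum>j\<in>A. a j * b j) \<le> (\<Sum>j\<in>A. a j) * (\<Sum>j\<in>A. b j)"
proof -
  have "(\<Sum>j\<in>A. a j * b j) \<le> (\<Sum>j\<in>A. a j * (\<Sum>k\<in>A. b k))"
    using assms by (intro sum_mono mult_left_mono member_le_sum) auto
  then show ?thesis by (simp add: sum_distrib_right)
qed

lemma Bd_diff:
  "Bd J Xn P1 P2 rh c e - Bd J Xn P1 P2 rh c' e
     = (\<Sum>p\<in>P2. posp (rh p) * (ev J (\<lambda>i. c i - c' i) p \<bullet> e1) * (ev J e p \<bullet> e1))"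
proof -
  have "Bd J Xn P1 P2 rh c e - Bd J Xn P1 P2 rh c' e
     = (\<Sum>p\<in>P2. ((posp (rh p) *\<^sub>R (ev J Xn p + ev J c p) + negp (rh p) *\<^sub>R ev J Xn p) \<bullet> e1) * (ev J e p \<bullet> e1)
          - ((posp (rh p) *\<^sub>R (ev J Xn p + ev J c' p) + negp (rh p) *\<^sub>R ev J Xn p) \<bullet> e1) * (ev J e p \<bullet> e1))"
    unfolding Bd_def sum_subtractf by simp
  also have "\<dots> = (\<Sum>p\<in>P2. posp (rh p) * (ev J (\<lambda>i. c i - c' i) p \<bullet> e1) * (ev J e p \<bullet> e1))"
  proof (intro sum.cong refl)
    fix p
    have ed: "ev J (\<lambda>i. c i - c' i) p = ev J c p - ev J c' p" by (simp add: ev_def)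
    show "((posp (rh p) *\<^sub>R (ev J Xn p + ev J c p) + negp (rh p) *\<^sub>R ev J Xn p) \<bullet> e1) * (ev J e p \<bullet> e1)
          - ((posp (rh p) *\<^sub>R (ev J Xn p + ev J c' p) + negp (rh p) *\<^sub>R ev J Xn p) \<bullet> e1) * (ev J e p \<bullet> e1)
        = posp (rh p) * (ev J (\<lambda>i. c i - c' i) p \<bullet> e1) * (ev J e p \<bullet> e1)"
      unfolding ed by (simp add: inner_add_left inner_diff_left algebra_simps)
  qed
  finally show ?thesis .
qed

lemma posp_nn: "posp r \<ge> 0" by (simp add: posp_def)
lemma posp_le: "posp r \<le> \<bar>r\<bar>" by (simp add: posp_def)

lemma norm_ev_le: "J > 0 \<Longrightarrow> norm (ev J c p) \<le> (\<Sum>i\<le>J. norm (c i))"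
  unfolding ev_def by (auto intro!: member_le_sum)

locale phis =
  fixes J :: nat and Xn :: "nat \<Rightarrow> real \<times> real" and dt m :: real
    and lump :: bool and P1 P2 :: "real set" and rh :: "real \<Rightarrow> real"
  assumes J: "J > 0" and m: "m > 0" and dt: "dt > 0" and dt4: "dt < 4 * m\<^sup>2"
    and hm: "\<And>j t. j \<in> {1..J} \<Longrightarrow> t \<in> el J j \<Longrightarrow> m \<le> affc J Xn j t \<bullet> e1"
    and hL: "\<And>j. j \<in> {1..J} \<Longrightarrow> norm (slc J Xn j) > 0"
    and P1: "P1 \<subseteq> {0, 1}" and P2: "P2 \<subseteq> {0, 1}"
begin

definition "Lm = Min ((\<lambda>j. norm (slc J Xn j)) ` {1..J})"
definition "Lx = Max ((\<lambda>j. norm (slc J Xn j)) ` {1..J})"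
definition "Mx = 2 * (\<Sum>i\<le>J. norm (Xn i))"
definition "\<kappa> = (1 - sqrt dt / (2 * m)) * (m * Lm / dt) / (6 * real J)"
definition "K = 4 * ((1 / real J) * (Mx * Lx / dt + real J + Mx * (real J)\<^sup>2 / Lm)) + 2 * (\<bar>rh 0\<bar> + \<bar>rh 1\<bar>)"

lemma ne: "(\<lambda>j. norm (slc J Xn j)) ` {1..J} \<noteq> {}" using J by auto

lemma Lm_le: "j \<in> {1..J} \<Longrightarrow> Lm \<le> norm (slc J Xn j)"
  unfolding Lm_def by (rule Min_le) auto
lemma Lx_ge: "j \<in> {1..J} \<Longrightarrow> norm (slc J Xn j) \<le> Lx"
  unfolding Lx_def by (rule Max_ge) auto
lemma Lm_pos: "Lm > 0"
proof -
  have "Lm \<in> (\<lambda>j. norm (slc J Xn j)) ` {1..J}" unfolding Lm_def using ne by (intro Min_in) auto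
  then show ?thesis using hL by auto
qed

lemma th1: "sqrt dt / (2 * m) < 1"
proof -
  have "sqrt dt < sqrt (4 * m\<^sup>2)" using dt4 by simp
  also have "\<dots> = 2 * m" using m by (simp add: real_sqrt_mult)
  finally show ?thesis using m by simp
qed

lemma kappa_pos: "\<kappa> > 0"
  unfolding \<kappa>_def using th1 m Lm_pos dt J by (intro mult_pos_pos divide_pos_pos) auto

lemma Mx_bound: "j \<in> {1..J} \<Longrightarrow> t \<in> el J j \<Longrightarrow> \<bar>affc J Xn j t \<bullet> e1\<bar> \<le> Mx"
proof -
  assume j: "j \<in> {1..J}" and t: "t \<in> el J j"
  have "\<bar>affc J Xn j t \<bullet> e1\<bar> \<le> norm (affc J Xn j t)" by (rule abs_e1)
  also have "\<dots> \<le> norm (Xn (j - 1)) + norm (Xn j)" using affc_norm_le2[OF J _ t] j by auto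
  also have "\<dots> \<le> Mx"
  proof -
    have "norm (Xn (j - 1)) \<le> (\<Sum>i\<le>J. norm (Xn i))" "norm (Xn j) \<le> (\<Sum>i\<le>J. norm (Xn i))"
      using j by (auto intro!: member_le_sum)
    then show ?thesis unfolding Mx_def by linarith
  qed
  finally show ?thesis .
qed

lemma Phi_mono:
  fixes c c' :: "nat \<Rightarrow> real \<times> real"
  defines "D \<equiv> (\<lambda>i. c i - c' i)"
  shows "Phi lump J Xn dt P1 P2 rh c D - Phi lump J Xn dt P1 P2 rh c' D \<ge> \<kappa> * (\<Sum>i\<le>J. (norm (D i))\<^sup>2)"
proof -
  have el: "Pel lump J Xn dt c D j - Pel lump J Xn dt c' D j \<ge> \<kappa> * ((norm (D (j - 1)))\<^sup>2 + (norm (D j))\<^sup>2)"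
    if j: "j \<in> {1..J}" for j
  proof -
    have "(1 - sqrt dt / (2 * m)) * (m * norm (slc J Xn j) / dt) / (6 * real J) \<ge> \<kappa>"
    proof -
      have a: "m * Lm / dt \<le> m * norm (slc J Xn j) / dt"
        using Lm_le[OF j] m dt by (intro divide_right_mono mult_left_mono) auto
      have "(1 - sqrt dt / (2 * m)) * (m * Lm / dt) \<le> (1 - sqrt dt / (2 * m)) * (m * norm (slc J Xn j) / dt)"
        using a th1 by (intro mult_left_mono) auto
      then show ?thesis unfolding \<kappa>_def using J by (intro divide_right_mono) auto
    qed
    then have "\<kappa> * ((norm (D (j - 1)))\<^sup>2 + (norm (D j))\<^sup>2)
        \<le> (1 - sqrt dt / (2 * m)) * (m * norm (slc J Xn j) / dt) / (6 * real J) * ((norm (D (j - 1)))\<^sup>2 + (norm (D j))\<^sup>2)"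
      by (intro mult_right_mono) auto
    also have "\<dots> \<le> Pel lump J Xn dt c D j - Pel lump J Xn dt c' D j"
      unfolding D_def by (rule Pel_mono[OF J j m dt dt4 hm[OF j] hL[OF j]])
    finally show ?thesis .
  qed
  have bd: "Bd J Xn P1 P2 rh c D - Bd J Xn P1 P2 rh c' D \<ge> 0"
    unfolding Bd_diff D_def[symmetric]
    by (intro sum_nonneg) (simp add: posp_nn mult.assoc)
  have "\<kappa> * (\<Sum>i\<le>J. (norm (D i))\<^sup>2) \<le> \<kappa> * (\<Sum>j=1..J. (norm (D (j - 1)))\<^sup>2 + (norm (D j))\<^sup>2)"
    using kappa_pos J by (intro mult_left_mono sum_adj_sq) auto
  also have "\<dots> = (\<Sum>j=1..J. \<kappa> * ((norm (D (j - 1)))\<^sup>2 + (norm (D j))\<^sup>2))" by (simp add: sum_distrib_left)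
  also have "\<dots> \<le> (\<Sum>j=1..J. Pel lump J Xn dt c D j - Pel lump J Xn dt c' D j)"
    by (intro sum_mono el) auto
  also have "\<dots> \<le> Phi lump J Xn dt P1 P2 rh c D - Phi lump J Xn dt P1 P2 rh c' D"
    unfolding Phi_decomp using bd by (simp add: sum_subtractf)
  finally show ?thesis .
qed

lemma Phi_lip:
  fixes c c' v :: "nat \<Rightarrow> real \<times> real"
  defines "D \<equiv> (\<lambda>i. c i - c' i)"
  shows "\<bar>Phi lump J Xn dt P1 P2 rh c v - Phi lump J Xn dt P1 P2 rh c' v\<bar>
    \<le> K * (\<Sum>i\<le>J. norm (D i)) * (\<Sum>i\<le>J. norm (v i))"
proof -
  define K0 where "K0 = (1 / real J) * (Mx * Lx / dt + real J + Mx * (real J)\<^sup>2 / Lm)"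
  define SD where "SD = (\<Sum>i\<le>J. norm (D i))"
  define Sv where "Sv = (\<Sum>i\<le>J. norm (v i))"
  have K0: "K0 \<ge> 0"
  proof -
    have "Mx \<ge> 0" unfolding Mx_def by (simp add: sum_nonneg)
    moreover have "Lx \<ge> 0"
    proof -
      have "1 \<in> {1..J}" using J by simp
      then show ?thesis using Lx_ge[of 1] hL[of 1] by linarith
    qed
    ultimately show ?thesis unfolding K0_def using J dt Lm_pos by (intro mult_nonneg_nonneg add_nonneg_nonneg) auto
  qed
  have SD0: "SD \<ge> 0" and Sv0: "Sv \<ge> 0" by (auto simp: SD_def Sv_def sum_nonneg)
  have el: "\<bar>Pel lump J Xn dt c v j - Pel lump J Xn dt c' v j\<bar>
      \<le> K0 * ((norm (D (j - 1)) + norm (D j)) * (norm (v (j - 1)) + norm (v j)))" if j: "j \<in> {1..J}" for j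
    unfolding K0_def D_def
    by (rule Pel_lip[OF J j dt Mx_bound[OF j] Lx_ge[OF j] Lm_pos Lm_le[OF j]])
  have s1: "\<bar>\<Sum>j=1..J. Pel lump J Xn dt c v j - Pel lump J Xn dt c' v j\<bar> \<le> K0 * (4 * SD * Sv)"
  proof -
    have "\<bar>\<Sum>j=1..J. Pel lump J Xn dt c v j - Pel lump J Xn dt c' v j\<bar>
        \<le> (\<Sum>j=1..J. \<bar>Pel lump J Xn dt c v j - Pel lump J Xn dt c' v j\<bar>)" by (rule sum_abs)
    also have "\<dots> \<le> (\<Sum>j=1..J. K0 * ((norm (D (j - 1)) + norm (D j)) * (norm (v (j - 1)) + norm (v j))))"
      by (intro sum_mono el) auto
    also have "\<dots> = K0 * (\<Sum>j=1..J. (norm (D (j - 1)) + norm (D j)) * (norm (v (j - 1)) + norm (v j)))"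
      by (simp add: sum_distrib_left)
    also have "\<dots> \<le> K0 * ((\<Sum>j=1..J. norm (D (j - 1)) + norm (D j)) * (\<Sum>j=1..J. norm (v (j - 1)) + norm (v j)))"
      using K0 by (intro mult_left_mono sum_prod_le) auto
    also have "\<dots> \<le> K0 * ((2 * SD) * (2 * Sv))"
      unfolding SD_def Sv_def using K0
      by (intro mult_left_mono mult_mono sum_adj_le) (auto intro: sum_nonneg add_nonneg_nonneg)
    finally show ?thesis by (simp add: algebra_simps)
  qed
  have s2: "\<bar>Bd J Xn P1 P2 rh c v - Bd J Xn P1 P2 rh c' v\<bar> \<le> 2 * ((\<bar>rh 0\<bar> + \<bar>rh 1\<bar>) * SD * Sv)"
  proof -
    have fin: "finite P2" using P2 finite_subset by auto
    have "\<bar>Bd J Xn P1 P2 rh c v - Bd J Xn P1 P2 rh c' v\<bar> \<le> (\<Sum>p\<in>P2. \<bar>posp (rh p) * (ev J D p \<bullet> e1) * (ev J v p \<bullet> e1)\<bar>)"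
      unfolding Bd_diff D_def[symmetric] by (rule sum_abs)
    also have "\<dots> \<le> (\<Sum>p\<in>P2. (\<bar>rh 0\<bar> + \<bar>rh 1\<bar>) * SD * Sv)"
    proof (intro sum_mono)
      fix p assume p: "p \<in> P2"
      have r: "\<bar>posp (rh p)\<bar> \<le> \<bar>rh 0\<bar> + \<bar>rh 1\<bar>" using p P2 posp_le[of "rh p"] posp_nn[of "rh p"] by auto
      have a: "\<bar>ev J D p \<bullet> e1\<bar> \<le> SD" unfolding SD_def using abs_e1 norm_ev_le[OF J] by (rule order_trans)
      have b: "\<bar>ev J v p \<bullet> e1\<bar> \<le> Sv" unfolding Sv_def using abs_e1 norm_ev_le[OF J] by (rule order_trans)
      show "\<bar>posp (rh p) * (ev J D p \<bullet> e1) * (ev J v p \<bullet> e1)\<bar> \<le> (\<bar>rh 0\<bar> + \<bar>rh 1\<bar>) * SD * Sv"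
        unfolding abs_mult using r a b SD0 by (intro mult_mono) auto
    qed
    also have "\<dots> = real (card P2) * ((\<bar>rh 0\<bar> + \<bar>rh 1\<bar>) * SD * Sv)" by simp
    also have "\<dots> \<le> 2 * ((\<bar>rh 0\<bar> + \<bar>rh 1\<bar>) * SD * Sv)"
    proof (rule mult_right_mono)
      have "card P2 \<le> card {0::real, 1}" using P2 by (intro card_mono) auto
      then show "real (card P2) \<le> 2" by simp
    qed (use SD0 Sv0 in auto)
    finally show ?thesis .
  qed
  have "\<bar>Phi lump J Xn dt P1 P2 rh c v - Phi lump J Xn dt P1 P2 rh c' v\<bar>
      = \<bar>(\<Sum>j=1..J. Pel lump J Xn dt c v j - Pel lump J Xn dt c' v j) + (Bd J Xn P1 P2 rh c v - Bd J Xn P1 P2 rh c' v)\<bar>"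
    unfolding Phi_decomp by (simp add: sum_subtractf algebra_simps)
  also have "\<dots> \<le> K0 * (4 * SD * Sv) + 2 * ((\<bar>rh 0\<bar> + \<bar>rh 1\<bar>) * SD * Sv)"
    using s1 s2 by linarith
  also have "\<dots> = K * SD * Sv" unfolding K_def K0_def by (simp add: algebra_simps)
  finally show ?thesis by (simp add: SD_def Sv_def)
qed

end

definition iota :: "bool \<Rightarrow> nat \<Rightarrow> nat \<Rightarrow> nat" where
  "iota per J i = (if per \<and> i = J then 0 else i)"
definition Rf :: "bool \<Rightarrow> nat \<Rightarrow> (nat \<times> bool \<Rightarrow> real) \<Rightarrow> nat \<Rightarrow> real \<times> real" where
  "Rf per J w i = (w (iota per J i, False), w (iota per J i, True))"
definition mk :: "nat \<Rightarrow> real set \<Rightarrow> real set \<Rightarrow> real set \<Rightarrow> nat \<Rightarrow> bool \<Rightarrow> bool" where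
  "mk J PD P1 P2 i k = ((i = 0 \<and> (0 \<in> PD \<or> (if k then 0 \<in> P2 else 0 \<in> P1)))
                      \<or> (i = J \<and> (1 \<in> PD \<or> (if k then 1 \<in> P2 else 1 \<in> P1))))"
definition Sset :: "bool \<Rightarrow> nat \<Rightarrow> real set \<Rightarrow> real set \<Rightarrow> real set \<Rightarrow> (nat \<times> bool) set" where
  "Sset per J PD P1 P2 = {(i, k). i \<le> J \<and> \<not> (per \<and> i = J) \<and> \<not> mk J PD P1 P2 i k}"

lemma Rf_add: "Rf per J (\<lambda>x. u x + v x) = (\<lambda>i. Rf per J u i + Rf per J v i)"
  by (simp add: Rf_def fun_eq_iff)
lemma Rf_scale: "Rf per J (\<lambda>x. a * u x) = (\<lambda>i. a *\<^sub>R Rf per J u i)"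
  by (simp add: Rf_def fun_eq_iff)
lemma Rf_diff: "Rf per J (\<lambda>x. u x - v x) = (\<lambda>i. Rf per J u i - Rf per J v i)"
  by (simp add: Rf_def fun_eq_iff)

lemma Sset_sub: "Sset per J PD P1 P2 \<subseteq> {..J} \<times> UNIV"
  by (auto simp: Sset_def)

lemma finite_Sset: "finite (Sset per J PD P1 P2)"
  by (rule finite_subset[OF Sset_sub]) auto

lemma sum_pairs: "(\<Sum>m\<in>{..J} \<times> (UNIV :: bool set). f m) = (\<Sum>i\<le>J. f (i, False) + f (i, True))"
proof -
  have "(\<Sum>m\<in>{..J} \<times> (UNIV :: bool set). f m) = (\<Sum>i\<le>J. \<Sum>k\<in>(UNIV :: bool set). f (i, k))"
    by (simp add: sum.cartesian_product)
  also have "\<dots> = (\<Sum>i\<le>J. f (i, False) + f (i, True))" by (simp add: UNIV_bool)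
  finally show ?thesis .
qed

lemma sum_S_ext:
  assumes "\<forall>m. m \<notin> Sset per J PD P1 P2 \<longrightarrow> u m = 0" "\<And>m. u m = 0 \<Longrightarrow> f m = 0"
  shows "(\<Sum>m\<in>Sset per J PD P1 P2. f m) = (\<Sum>m\<in>{..J} \<times> (UNIV :: bool set). f m)"
  by (rule sum.mono_neutral_left) (use assms Sset_sub in auto)

lemma norm_pair_sq: "(norm (a, b))\<^sup>2 = a\<^sup>2 + b\<^sup>2" for a b :: real
  by (simp add: norm_Pair)

lemma norm_pair_le: "norm (a, b) \<le> \<bar>a\<bar> + \<bar>b\<bar>" for a b :: real
proof -
  have "norm (a, b) = sqrt (a\<^sup>2 + b\<^sup>2)" by (simp add: norm_Pair)
  also have "\<dots> \<le> sqrt ((\<bar>a\<bar> + \<bar>b\<bar>)\<^sup>2)"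
    by (rule real_sqrt_le_mono) (simp add: power2_eq_square algebra_simps)
  also have "\<dots> = \<bar>a\<bar> + \<bar>b\<bar>" by simp
  finally show ?thesis .
qed

lemma Rf_sumsq:
  assumes u: "\<forall>m. m \<notin> Sset per J PD P1 P2 \<longrightarrow> u m = 0"
  shows "(\<Sum>m\<in>Sset per J PD P1 P2. (u m)\<^sup>2) \<le> (\<Sum>i\<le>J. (norm (Rf per J u i))\<^sup>2)"
proof -
  have "(\<Sum>m\<in>Sset per J PD P1 P2. (u m)\<^sup>2) = (\<Sum>i\<le>J. (u (i, False))\<^sup>2 + (u (i, True))\<^sup>2)"
    using sum_S_ext[OF u, where f="\<lambda>m. (u m)\<^sup>2"] sum_pairs[where J=J and f="\<lambda>m. (u m)\<^sup>2"] by simp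
  also have "\<dots> \<le> (\<Sum>i\<le>J. (norm (Rf per J u i))\<^sup>2)"
  proof (rule sum_mono)
    fix i assume i: "i \<in> {..J}"
    show "(u (i, False))\<^sup>2 + (u (i, True))\<^sup>2 \<le> (norm (Rf per J u i))\<^sup>2"
    proof (cases "per \<and> i = J")
      case True
      then have "(i, False) \<notin> Sset per J PD P1 P2" "(i, True) \<notin> Sset per J PD P1 P2" by (auto simp: Sset_def)
      then show ?thesis using u by simp
    next
      case False
      then have "iota per J i = i" unfolding iota_def by auto
      then show ?thesis by (simp add: Rf_def norm_pair_sq)
    qed
  qed
  finally show ?thesis .
qed

lemma sum_iota: "(\<And>i. g i \<ge> 0) \<Longrightarrow> (\<Sum>i\<le>J. g (iota per J i)) \<le> 2 * (\<Sum>i\<le>J. g i)" for g :: "nat \<Rightarrow> real"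
proof (cases per)
  case False
  assume "\<And>i. g i \<ge> 0"
  then have "0 \<le> (\<Sum>i\<le>J. g i)" by (simp add: sum_nonneg)
  then show ?thesis using False by (simp add: iota_def)
next
  case True
  assume g: "\<And>i. g i \<ge> 0"
  have "(\<Sum>i\<le>J. g (iota per J i)) = (\<Sum>i<J. g (iota per J i)) + g (iota per J J)"
    by (simp add: lessThan_Suc_atMost[symmetric])
  also have "\<dots> = (\<Sum>i<J. g i) + g 0" using True by (simp add: iota_def)
  also have "\<dots> \<le> (\<Sum>i\<le>J. g i) + (\<Sum>i\<le>J. g i)"
    using g by (intro add_mono sum_mono2 member_le_sum) auto
  finally show ?thesis by simp
qed

lemma Rf_suml1:
  assumes u: "\<forall>m. m \<notin> Sset per J PD P1 P2 \<longrightarrow> u m = 0"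
  shows "(\<Sum>i\<le>J. norm (Rf per J u i)) \<le> 2 * (\<Sum>m\<in>Sset per J PD P1 P2. \<bar>u m\<bar>)"
proof -
  have "(\<Sum>i\<le>J. norm (Rf per J u i)) \<le> (\<Sum>i\<le>J. (\<lambda>i. \<bar>u (i, False)\<bar> + \<bar>u (i, True)\<bar>) (iota per J i))"
    unfolding Rf_def by (intro sum_mono norm_pair_le)
  also have "\<dots> \<le> 2 * (\<Sum>i\<le>J. \<bar>u (i, False)\<bar> + \<bar>u (i, True)\<bar>)" by (rule sum_iota) auto
  also have "(\<Sum>i\<le>J. \<bar>u (i, False)\<bar> + \<bar>u (i, True)\<bar>) = (\<Sum>m\<in>Sset per J PD P1 P2. \<bar>u m\<bar>)"
    using sum_S_ext[OF u, where f="\<lambda>m. \<bar>u m\<bar>"] sum_pairs[where J=J and f="\<lambda>m. \<bar>u m\<bar>"] by simp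
  finally show ?thesis .
qed

lemma affc_cong: "e (j - 1) = e' (j - 1) \<Longrightarrow> e j = e' j \<Longrightarrow> affc J e j = affc J e' j"
  by (simp add: affc_def fun_eq_iff)
lemma slc_cong: "e (j - 1) = e' (j - 1) \<Longrightarrow> e j = e' j \<Longrightarrow> slc J e j = slc J e' j"
  by (simp add: slc_def)

lemma Phi_cong:
  assumes "\<And>i. i \<le> J \<Longrightarrow> e i = e' i"
  shows "Phi lump J Xn dt P1 P2 rh c e = Phi lump J Xn dt P1 P2 rh c e'"
proof -
  have a: "affc J e j = affc J e' j" "slc J e j = slc J e' j" if "j \<in> {1..J}" for j
    using that assms by (auto intro!: affc_cong slc_cong)
  have g: "Gm J Xn dt c e j = Gm J Xn dt c e' j" "G1 J Xn c e j = G1 J Xn c e' j" "G2 J Xn c e j = G2 J Xn c e' j"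
    if "j \<in> {1..J}" for j
    using a[OF that] by (simp_all add: Gm_def G1_def G2_def fun_eq_iff)
  have ev: "ev J e p = ev J e' p" for p using assms by (simp add: ev_def)
  show ?thesis unfolding Phi_def ev
    by (intro arg_cong2[where f="(+)"] arg_cong2[where f="(*)"] if_cong sum.cong refl) (simp_all add: g)
qed

lemma inner_e1: "v \<bullet> e1 = fst v" by (cases v) (simp add: e1_def)
lemma inner_e2: "v \<bullet> e2 = snd v" by (cases v) (simp add: e2_def)

theorem theorem4p5:
  fixes per lump :: bool and J :: nat
    and PD P0 P1 P2 :: "real set" and rho_hat :: "real \<Rightarrow> real"
    and X :: "real \<Rightarrow> real \<times> real" and dt :: real
  assumes J: "J \<ge> 3"
    and partition: "PD \<union> P0 \<union> P1 \<union> P2 = bdry per"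
      "PD \<inter> P0 = {}" "PD \<inter> P1 = {}" "PD \<inter> P2 = {}"
      "P0 \<inter> P1 = {}" "P0 \<inter> P2 = {}" "P1 \<inter> P2 = {}"
    and rho_hat: "\<bar>rho_hat 0\<bar> \<le> 1" "\<bar>rho_hat 1\<bar> \<le> 1"
    and P0_empty: "P0 = {}"
    and X: "X \<in> Vh per J"
    and A1: "\<exists>N. negligible N \<and> (\<forall>r\<in>{0..1} - N. norm (drho X r) > 0)"
    and A2: "\<forall>r\<in>{0..1} - P0. X r \<bullet> e1 > 0"
    and dt: "0 < dt" "dt < 3 * (INF r\<in>{0..1}. X r \<bullet> e1)\<^sup>2"
  shows "\<exists>dX kappa. dX \<in> Vh_bd per J PD P0 P1 P2 \<and> kappa \<in> Vh per J \<and>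
    (let X1 = (\<lambda>r. X r + dX r) in
      (\<forall>chi\<in>Vh per J.
         sharp_ip lump J (\<lambda>r. ((X r \<bullet> e1) *\<^sub>R ((1 / dt) *\<^sub>R (X1 r - X r))) \<bullet> (norm (drho X r) *\<^sub>R chi r))
       = sharp_ip lump J (\<lambda>r. ((X r \<bullet> e1) *\<^sub>R kappa r) \<bullet> (norm (drho X r) *\<^sub>R chi r)))
    \<and> (\<forall>eta\<in>Vh_bd per J PD P0 P1 P2.
         sharp_ip lump J (\<lambda>r. ((X r \<bullet> e1) *\<^sub>R kappa r) \<bullet> (norm (drho X r) *\<^sub>R eta r))
         + exact_ip (\<lambda>r. (eta r \<bullet> e1) * norm (drho X1 r))
         + exact_ip (\<lambda>r. ((X r \<bullet> e1) *\<^sub>R drho X1 r) \<bullet> (inverse (norm (drho X r)) *\<^sub>R drho eta r))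
       = - (\<Sum>p\<in>P1. rho_hat p * (X p \<bullet> e1) * (eta p \<bullet> e2))
         - (\<Sum>p\<in>P2. ((posp (rho_hat p) *\<^sub>R X1 p + negp (rho_hat p) *\<^sub>R X p) \<bullet> e1) * (eta p \<bullet> e1))))"
proof -
  have J0: "J > 0" using J by simp
  define Xn where "Xn = nv J X"
  have Xc: "continuous_on {0..1} X" using X by (simp add: Vh_def)
  have fc: "continuous_on {0..1} (\<lambda>r. X r \<bullet> e1)" using Xc by (intro continuous_intros)
  obtain x0 where x0: "x0 \<in> {0..1}" "\<And>y. y \<in> {0..1} \<Longrightarrow> X x0 \<bullet> e1 \<le> X y \<bullet> e1"
    using continuous_attains_inf[OF compact_Icc _ fc] by auto
  define m where "m = (INF r\<in>{0..1}. X r \<bullet> e1)"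
  have bdd: "bdd_below ((\<lambda>r. X r \<bullet> e1) ` {0..1})"
    using x0 by (auto intro!: bdd_belowI[where m="X x0 \<bullet> e1"])
  have m_eq: "m = X x0 \<bullet> e1"
  proof (rule antisym)
    show "m \<le> X x0 \<bullet> e1" unfolding m_def by (rule cINF_lower[OF bdd x0(1)])
    show "X x0 \<bullet> e1 \<le> m" unfolding m_def by (rule cINF_greatest) (use x0 in auto)
  qed
  have mpos: "m > 0" using A2 x0(1) P0_empty m_eq by auto
  have mle: "m \<le> X t \<bullet> e1" if "t \<in> {0..1}" for t using x0(2)[OF that] m_eq by simp
  have dt4: "dt < 4 * m\<^sup>2"
  proof -
    have "0 < m * m" using mpos by simp
    then show ?thesis using dt(2) unfolding m_def[symmetric] by (simp add: power2_eq_square)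
  qed
  have hm: "m \<le> affc J Xn j t \<bullet> e1" if j: "j \<in> {1..J}" and t: "t \<in> el J j" for j t
  proof -
    have tc: "t \<in> {node J (j - 1)..node J j}" using t by (simp add: el_def)
    have e: "X t = affc J Xn j t" using Vh_affine[OF X J0 j tc] by (simp add: Xn_def)
    have "t \<in> {0..1}" using el_sub[OF J0 j] tc by auto
    then show ?thesis using mle[of t] unfolding e by simp
  qed
  obtain N where N: "negligible N" "\<forall>r\<in>{0..1} - N. norm (drho X r) > 0" using A1 by auto
  have hL: "norm (slc J Xn j) > 0" if j: "j \<in> {1..J}" for j
  proof (rule ccontr)
    assume "\<not> norm (slc J Xn j) > 0"
    then have z: "slc J Xn j = 0" by simp
    have "{node J (j - 1)<..<node J j} \<subseteq> N"
    proof
      fix t assume t: "t \<in> {node J (j - 1)<..<node J j}"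
      have "drho X t = 0" using Vh_drho[OF X J0 j t] z by (simp add: Xn_def)
      moreover have "t \<in> {0..1}" using el_sub[OF J0 j] t by auto
      ultimately show "t \<in> N" using N(2) by force
    qed
    then have "negligible {node J (j - 1)<..<node J j}" by (rule negligible_subset[OF N(1)])
    then have "negligible (box (node J (j - 1)) (node J j))" by simp
    then have "box (node J (j - 1)) (node J j) = {}" using negligible_interval(2) by blast
    moreover have "node J (j - 1) < node J j" using node_le[OF J0] j by auto
    ultimately show False by (simp add: box_real)
  qed
  have Pb: "PD \<subseteq> bdry per" "P1 \<subseteq> bdry per" "P2 \<subseteq> bdry per" using partition(1) by auto
  have P1s: "P1 \<subseteq> {0, 1}" and P2s: "P2 \<subseteq> {0, 1}" and PDs: "PD \<subseteq> {0, 1}"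
    using Pb by (auto simp: bdry_def split: if_splits)
  have perE: "per \<Longrightarrow> PD = {} \<and> P1 = {} \<and> P2 = {}" using Pb by (auto simp: bdry_def)
  interpret phis J Xn dt m lump P1 P2 rho_hat
    by unfold_locales (use J0 mpos dt(1) dt4 hm hL P1s P2s in auto)
  define S where "S = Sset per J PD P1 P2"
  define \<Psi> where "\<Psi> w v = Phi lump J Xn dt P1 P2 rho_hat (Rf per J w) (Rf per J v)" for w v
  have "\<exists>w. (\<forall>i. i \<notin> S \<longrightarrow> w i = 0) \<and> (\<forall>v. (\<forall>i. i \<notin> S \<longrightarrow> v i = 0) \<longrightarrow> \<Psi> w v = 0)"
  proof (rule contraction_zero[where \<mu> = \<kappa> and \<Lambda> = "4 * \<bar>K\<bar>"])
    show "finite S" unfolding S_def by (rule finite_Sset)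
    show "0 < \<kappa>" by (rule kappa_pos)
    show "\<Psi> w (\<lambda>i. u i + v i) = \<Psi> w u + \<Psi> w v" for w u v
      unfolding \<Psi>_def Rf_add by (rule Phi_add)
    show "\<Psi> w (\<lambda>i. a * u i) = a * \<Psi> w u" for w u a
      unfolding \<Psi>_def Rf_scale by (rule Phi_scale)
  next
    fix w w' :: "nat \<times> bool \<Rightarrow> real"
    assume w: "\<forall>i. i \<notin> S \<longrightarrow> w i = 0" and w': "\<forall>i. i \<notin> S \<longrightarrow> w' i = 0"
    have d: "\<forall>i. i \<notin> Sset per J PD P1 P2 \<longrightarrow> w i - w' i = 0" using w w' by (simp add: S_def)
    have "\<kappa> * (\<Sum>i\<in>S. (w i - w' i)\<^sup>2) \<le> \<kappa> * (\<Sum>i\<le>J. (norm (Rf per J (\<lambda>i. w i - w' i) i))\<^sup>2)"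
      using kappa_pos Rf_sumsq[OF d] unfolding S_def by (intro mult_left_mono) auto
    also have "\<dots> \<le> \<Psi> w (\<lambda>i. w i - w' i) - \<Psi> w' (\<lambda>i. w i - w' i)"
      unfolding \<Psi>_def Rf_diff by (rule Phi_mono)
    finally show "\<Psi> w (\<lambda>i. w i - w' i) - \<Psi> w' (\<lambda>i. w i - w' i) \<ge> \<kappa> * (\<Sum>i\<in>S. (w i - w' i)\<^sup>2)" .
  next
    fix w w' v :: "nat \<times> bool \<Rightarrow> real"
    assume w: "\<forall>i. i \<notin> S \<longrightarrow> w i = 0" and w': "\<forall>i. i \<notin> S \<longrightarrow> w' i = 0" and v: "\<forall>i. i \<notin> S \<longrightarrow> v i = 0"
    have d: "\<forall>i. i \<notin> Sset per J PD P1 P2 \<longrightarrow> w i - w' i = 0" using w w' by (simp add: S_def)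
    have v': "\<forall>i. i \<notin> Sset per J PD P1 P2 \<longrightarrow> v i = 0" using v by (simp add: S_def)
    define a where "a = (\<Sum>i\<le>J. norm (Rf per J (\<lambda>i. w i - w' i) i))"
    define b where "b = (\<Sum>i\<le>J. norm (Rf per J v i))"
    have a0: "a \<ge> 0" and b0: "b \<ge> 0" by (auto simp: a_def b_def sum_nonneg)
    have a1: "a \<le> 2 * (\<Sum>i\<in>S. \<bar>w i - w' i\<bar>)" unfolding a_def S_def by (rule Rf_suml1[OF d])
    have b1: "b \<le> 2 * (\<Sum>i\<in>S. \<bar>v i\<bar>)" unfolding b_def S_def by (rule Rf_suml1[OF v'])
    have "\<bar>\<Psi> w v - \<Psi> w' v\<bar> \<le> K * a * b"
      unfolding \<Psi>_def a_def b_def using Phi_lip[where c="Rf per J w" and c'="Rf per J w'" and v="Rf per J v"] by (simp add: Rf_diff)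
    also have "\<dots> \<le> \<bar>K\<bar> * a * b" using a0 b0 by (intro mult_right_mono) auto
    also have "\<dots> \<le> \<bar>K\<bar> * (2 * (\<Sum>i\<in>S. \<bar>w i - w' i\<bar>)) * (2 * (\<Sum>i\<in>S. \<bar>v i\<bar>))"
      using a0 b0 a1 b1 by (intro mult_mono) auto
    finally show "\<bar>\<Psi> w v - \<Psi> w' v\<bar> \<le> 4 * \<bar>K\<bar> * (\<Sum>i\<in>S. \<bar>w i - w' i\<bar>) * (\<Sum>i\<in>S. \<bar>v i\<bar>)"
      by (simp add: algebra_simps)
  qed
  then obtain w where wS: "\<forall>i. i \<notin> S \<longrightarrow> w i = 0"
    and w0: "\<And>v. (\<forall>i. i \<notin> S \<longrightarrow> v i = 0) \<Longrightarrow> \<Psi> w v = 0" by blast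
  define c where "c = Rf per J w"
  have iota0: "iota per J 0 = 0" by (simp add: iota_def)
  have cper: "per \<longrightarrow> c J = c 0" by (auto simp: c_def Rf_def iota_def)
  have c0: "c 0 = (w (0, False), w (0, True))" by (simp add: c_def Rf_def iota0)
  have cJ: "\<not> per \<Longrightarrow> c J = (w (J, False), w (J, True))" by (simp add: c_def Rf_def iota_def)
  define dX where "dX = interp J c"
  define kap where "kap = (\<lambda>r. (1 / dt) *\<^sub>R dX r)"
  have dXV: "dX \<in> Vh per J" unfolding dX_def by (rule interp_Vh[OF J0 cper])
  have kap_eq: "kap = interp J (\<lambda>i. (1 / dt) *\<^sub>R c i)"
    unfolding kap_def dX_def interp_def by (simp add: scaleR_sum_right fun_eq_iff)
  have kapV: "kap \<in> Vh per J" unfolding kap_eq by (rule interp_Vh[OF J0]) (use cper in auto)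
  have dX0: "dX 0 = c 0" using interp_node[OF J0, of 0 c] by (simp add: dX_def)
  have dX1: "dX 1 = c J" using interp_node[OF J0, of J c] J0 by (simp add: dX_def)
  have notS0: "(0, k) \<notin> S" if "mk J PD P1 P2 0 k" for k using that by (simp add: S_def Sset_def)
  have notSJ: "(J, k) \<notin> S" if "mk J PD P1 P2 J k" for k using that by (simp add: S_def Sset_def)
  have dXbd: "dX \<in> Vh_bd per J PD P0 P1 P2"
    unfolding Vh_bd_def
  proof (intro CollectI conjI ballI dXV)
    show "dX r \<bullet> e1 = 0" if "r \<in> P0" for r using that P0_empty by simp
  next
    fix r assume r: "r \<in> P1"
    have np: "\<not> per" using perE r by blast
    show "dX r \<bullet> e1 = 0"
    proof (cases "r = 0")
      case True
      then have "w (0, False) = 0" using wS notS0[of False] r by (simp add: mk_def)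
      then show ?thesis using True dX0 c0 by (simp add: inner_e1)
    next
      case False
      then have r1: "r = 1" using r P1s by auto
      then have "w (J, False) = 0" using wS notSJ[of False] r by (simp add: mk_def)
      then show ?thesis using r1 dX1 cJ[OF np] by (simp add: inner_e1)
    qed
  next
    fix r assume r: "r \<in> P2"
    have np: "\<not> per" using perE r by blast
    show "dX r \<bullet> e2 = 0"
    proof (cases "r = 0")
      case True
      then have "w (0, True) = 0" using wS notS0[of True] r by (simp add: mk_def)
      then show ?thesis using True dX0 c0 by (simp add: inner_e2)
    next
      case False
      then have r1: "r = 1" using r P2s by auto
      then have "w (J, True) = 0" using wS notSJ[of True] r by (simp add: mk_def)
      then show ?thesis using r1 dX1 cJ[OF np] by (simp add: inner_e2)
    qed
  next
    fix r assume r: "r \<in> PD"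
    have np: "\<not> per" using perE r by blast
    show "dX r = 0"
    proof (cases "r = 0")
      case True
      then have "w (0, True) = 0" "w (0, False) = 0" using wS notS0[of True] notS0[of False] r by (auto simp: mk_def)
      then show ?thesis using True dX0 c0 by (simp add: zero_prod_def)
    next
      case False
      then have r1: "r = 1" using r PDs by auto
      then have "w (J, True) = 0" "w (J, False) = 0" using wS notSJ[of True] notSJ[of False] r by (auto simp: mk_def)
      then show ?thesis using r1 dX1 cJ[OF np] by (simp add: zero_prod_def)
    qed
  qed
  have eq2: "sharp_ip lump J (\<lambda>r. ((X r \<bullet> e1) *\<^sub>R kap r) \<bullet> (norm (drho X r) *\<^sub>R eta r))
         + exact_ip (\<lambda>r. (eta r \<bullet> e1) * norm (drho (\<lambda>r. X r + dX r) r))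
         + exact_ip (\<lambda>r. ((X r \<bullet> e1) *\<^sub>R drho (\<lambda>r. X r + dX r) r) \<bullet> (inverse (norm (drho X r)) *\<^sub>R drho eta r))
       = - (\<Sum>p\<in>P1. rho_hat p * (X p \<bullet> e1) * (eta p \<bullet> e2))
         - (\<Sum>p\<in>P2. ((posp (rho_hat p) *\<^sub>R (X p + dX p) + negp (rho_hat p) *\<^sub>R X p) \<bullet> e1) * (eta p \<bullet> e1))"
    if eta: "eta \<in> Vh_bd per J PD P0 P1 P2" for eta
  proof -
    have etaV: "eta \<in> Vh per J" using eta by (simp add: Vh_bd_def)
    have etab: "\<And>r. r \<in> P1 \<Longrightarrow> eta r \<bullet> e1 = 0" "\<And>r. r \<in> P2 \<Longrightarrow> eta r \<bullet> e2 = 0" "\<And>r. r \<in> PD \<Longrightarrow> eta r = 0"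
      using eta by (auto simp: Vh_bd_def)
    have etaper: "per \<Longrightarrow> eta 0 = eta 1" using etaV by (simp add: Vh_def)
    define v where "v = (\<lambda>(i, k). if (i, k) \<in> S then (if k then snd (nv J eta i) else fst (nv J eta i)) else 0)"
    have vS: "\<forall>i. i \<notin> S \<longrightarrow> v i = 0" by (auto simp: v_def)
    have comp: "(if k then snd (nv J eta i) else fst (nv J eta i)) = 0"
      if i: "i \<le> J" and np: "\<not> (per \<and> i = J)" and mki: "mk J PD P1 P2 i k" for i k
    proof -
      have "(i = 0 \<and> (0 \<in> PD \<or> (if k then 0 \<in> P2 else 0 \<in> P1))) \<or> (i = J \<and> (1 \<in> PD \<or> (if k then 1 \<in> P2 else 1 \<in> P1)))"
        using mki by (simp add: mk_def)
      then show ?thesis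
      proof
        assume a: "i = 0 \<and> (0 \<in> PD \<or> (if k then 0 \<in> P2 else 0 \<in> P1))"
        then show ?thesis using etab[of 0] by (cases k) (auto simp: nv_def inner_e1 inner_e2)
      next
        assume a: "i = J \<and> (1 \<in> PD \<or> (if k then 1 \<in> P2 else 1 \<in> P1))"
        then show ?thesis using etab[of 1] J0 by (cases k) (auto simp: nv_def inner_e1 inner_e2)
      qed
    qed
    have nvR: "nv J eta i = Rf per J v i" if i: "i \<le> J" for i
    proof (cases "per \<and> i = J")
      case False
      then have io: "iota per J i = i" unfolding iota_def by auto
      have "v (i, k) = (if k then snd (nv J eta i) else fst (nv J eta i))" for k
        using comp[OF i False, of k] i False by (auto simp: v_def S_def Sset_def)
      then show ?thesis unfolding Rf_def io by (metis prod.collapse)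
    next
      case True
      then have io: "iota per J i = 0" unfolding iota_def by auto
      have em: "PD = {}" "P1 = {}" "P2 = {}" using perE True by auto
      have inS: "(0, k) \<in> S" for k using J0 em by (auto simp: S_def Sset_def mk_def)
      have "Rf per J v i = nv J eta 0" unfolding Rf_def io using inS by (simp add: v_def)
      also have "\<dots> = nv J eta i" using True etaper J0 by (simp add: nv_def)
      finally show ?thesis by simp
    qed
    have "Phi lump J Xn dt P1 P2 rho_hat c (nv J eta) = Phi lump J Xn dt P1 P2 rho_hat c (Rf per J v)"
      by (rule Phi_cong) (rule nvR)
    also have "\<dots> = 0" using w0[OF vS] by (simp add: \<Psi>_def c_def)
    finally have P0: "Phi lump J Xn dt P1 P2 rho_hat c (nv J eta) = 0" .
    have br: "sharp_ip lump J (\<lambda>r. ((X r \<bullet> e1) *\<^sub>R ((1 / dt) *\<^sub>R ((X r + interp J c r) - X r))) \<bullet> (norm (drho X r) *\<^sub>R eta r))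
     + exact_ip (\<lambda>r. (eta r \<bullet> e1) * norm (drho (\<lambda>r. X r + interp J c r) r))
     + exact_ip (\<lambda>r. ((X r \<bullet> e1) *\<^sub>R drho (\<lambda>r. X r + interp J c r) r) \<bullet> (inverse (norm (drho X r)) *\<^sub>R drho eta r))
     + (\<Sum>p\<in>P1. rho_hat p * (X p \<bullet> e1) * (eta p \<bullet> e2))
     + (\<Sum>p\<in>P2. ((posp (rho_hat p) *\<^sub>R (X p + interp J c p) + negp (rho_hat p) *\<^sub>R X p) \<bullet> e1) * (eta p \<bullet> e1))
     = 0"
      using bridge[OF J0 X cper etaV P1s P2s, of lump dt rho_hat] P0 by (simp add: Xn_def)
    have eqA: "sharp_ip lump J (\<lambda>r. ((X r \<bullet> e1) *\<^sub>R kap r) \<bullet> (norm (drho X r) *\<^sub>R eta r))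
       = sharp_ip lump J (\<lambda>r. ((X r \<bullet> e1) *\<^sub>R ((1 / dt) *\<^sub>R ((X r + interp J c r) - X r))) \<bullet> (norm (drho X r) *\<^sub>R eta r))"
      by (simp add: kap_def dX_def)
    show ?thesis unfolding eqA unfolding dX_def using br by linarith
  qed
  show ?thesis
  proof (intro exI[of _ dX] exI[of _ kap] conjI dXbd kapV, unfold Let_def, intro conjI ballI)
    fix chi
    show "sharp_ip lump J (\<lambda>r. ((X r \<bullet> e1) *\<^sub>R ((1 / dt) *\<^sub>R ((X r + dX r) - X r))) \<bullet> (norm (drho X r) *\<^sub>R chi r))
       = sharp_ip lump J (\<lambda>r. ((X r \<bullet> e1) *\<^sub>R kap r) \<bullet> (norm (drho X r) *\<^sub>R chi r))"
      by (simp add: kap_def)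
  next
    fix eta assume "eta \<in> Vh_bd per J PD P0 P1 P2"
    then show "sharp_ip lump J (\<lambda>r. ((X r \<bullet> e1) *\<^sub>R kap r) \<bullet> (norm (drho X r) *\<^sub>R eta r))
         + exact_ip (\<lambda>r. (eta r \<bullet> e1) * norm (drho (\<lambda>r. X r + dX r) r))
         + exact_ip (\<lambda>r. ((X r \<bullet> e1) *\<^sub>R drho (\<lambda>r. X r + dX r) r) \<bullet> (inverse (norm (drho X r)) *\<^sub>R drho eta r))
       = - (\<Sum>p\<in>P1. rho_hat p * (X p \<bullet> e1) * (eta p \<bullet> e2))
         - (\<Sum>p\<in>P2. ((posp (rho_hat p) *\<^sub>R (X p + dX p) + negp (rho_hat p) *\<^sub>R X p) \<bullet> e1) * (eta p \<bullet> e1))"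
      by (rule eq2)
  qed
qed

end
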